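(* The category $\mathsf{Stone}^{\mathsf{R}}$ is equivalent to the category $\mathsf{BA}^\mathsf{S}$. The equivalence is given by the functor $\mathsf{Clop}\colon\mathsf{Stone}^{\mathsf{R}}\to\mathsf{BA}^\mathsf{S}$ sending a Stone space $X$ to the boolean algebra $\mathsf{Clop}(X)$ of its clopen subsets and a closed relation $R\colon X\to Y$ to the subordination $S_R\colon\mathsf{Clop}(X)\to\mathsf{Clop}(Y)$ with $U\mathrel{S_R}V\iff R[U]\subseteq V$, and the functor $\mathsf{Ult}\colon\mathsf{BA}^\mathsf{S}\to\mathsf{Stone}^{\mathsf{R}}$ sending a boolean algebra $A$ to its Stone space $\mathsf{Ult}(A)$ of ultrafilters and a subordination $S\colon A\to B$ to the closed relation $R_S\colon\mathsf{Ult}(A)\to\mathsf{Ult}(B)$ with $x\mathrel{R_S}y\iff S[x]\subseteq y$.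
   Context: A Stone space is a zero-dimensional compact Hausdorff space. A relation $R\subseteq X\times Y$ between topological spaces is closed if it is a closed subset of $X\times Y$. For $F\subseteq X$, $R[F]=\{y\mid \exists x\in F,\ x\mathrel{R}y\}$. $\mathsf{Stone}^{\mathsf{R}}$ is the category of Stone spaces and closed relations, with identity relations as identities and relational composition. A subordination relation from a boolean algebra $A$ to a boolean algebra $B$ is a relation $S\subseteq A\times B$ such that for $a,b\in A$, $c,d\in B$: (S1) $0\mathrel{S}0$ and $1\mathrel{S}1$; (S2) $a\mathrel{S}c$ and $b\mathrel{S}c$ imply $(a\vee b)\mathrel{S}c$; (S3) $a\mathrel{S}c$ and $a\mathrel{S}d$ imply $a\mathrel{S}(c\wedge d)$; (S4) $a\le b$, $b\mathrel{S}c$, $c\le d$ imply $a\mathrel{S}d$. $\mathsf{BA}^\mathsf{S}$ is the category of boolean algebras and subordination relations; the identity on $A$ is $\le_A$ and composition is relational composition ($a\mathrel{(S_2\circ S_1)}c$ iff $\exists b$ with $a\mathrel{S_1}b\mathrel{S_2}c$). $S[x]=\{b\mid\exists a\in x,\ a\mathrel{S}b\}$. *)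

theory Defs
  imports "HOL-Analysis.Analysis"
begin

definition stone_space :: "'x topology \<Rightarrow> bool" where
  "stone_space X \<longleftrightarrow> compact_space X \<and> Hausdorff_space X \<and> X dim_le 0"

text \<open>Morphisms X \<rightarrow> Y in Stone^R: closed relations R \<subseteq> X \<times> Y.\<close>
definition closed_rel :: "'x topology \<Rightarrow> 'y topology \<Rightarrow> ('x \<times> 'y) set \<Rightarrow> bool" where
  "closed_rel X Y R \<longleftrightarrow> R \<subseteq> topspace X \<times> topspace Y \<and> closedin (prod_topology X Y) R"

text \<open>Identity of Stone^R; composition is relational composition R O R' (first R, then R').\<close>
definition stone_id :: "'x topology \<Rightarrow> ('x \<times> 'x) set" where
  "stone_id X = Id_on (topspace X)"

definition stone_iso :: "'x topology \<Rightarrow> 'y topology \<Rightarrow> ('x \<times> 'y) set \<Rightarrow> bool" where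
  "stone_iso X Y R \<longleftrightarrow> closed_rel X Y R \<and>
     (\<exists>R'. closed_rel Y X R' \<and> R O R' = stone_id X \<and> R' O R = stone_id Y)"

record 'a ba =
  carrier :: "'a set"
  join :: "'a \<Rightarrow> 'a \<Rightarrow> 'a"
  meet :: "'a \<Rightarrow> 'a \<Rightarrow> 'a"
  neg :: "'a \<Rightarrow> 'a"
  zero :: 'a
  one :: 'a

definition is_ba :: "'a ba \<Rightarrow> bool" where
  "is_ba A \<longleftrightarrow>
     zero A \<in> carrier A \<and> one A \<in> carrier A \<and>
     (\<forall>a\<in>carrier A. neg A a \<in> carrier A) \<and>
     (\<forall>a\<in>carrier A. \<forall>b\<in>carrier A. join A a b \<in> carrier A \<and> meet A a b \<in> carrier A) \<and>
     (\<forall>a\<in>carrier A. \<forall>b\<in>carrier A.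
        join A a b = join A b a \<and> meet A a b = meet A b a \<and>
        join A a (meet A a b) = a \<and> meet A a (join A a b) = a) \<and>
     (\<forall>a\<in>carrier A. \<forall>b\<in>carrier A. \<forall>c\<in>carrier A.
        join A a (join A b c) = join A (join A a b) c \<and>
        meet A a (meet A b c) = meet A (meet A a b) c \<and>
        meet A a (join A b c) = join A (meet A a b) (meet A a c)) \<and>
     (\<forall>a\<in>carrier A. join A a (neg A a) = one A \<and> meet A a (neg A a) = zero A)"

definition ba_le :: "'a ba \<Rightarrow> 'a \<Rightarrow> 'a \<Rightarrow> bool" where
  "ba_le A a b \<longleftrightarrow> meet A a b = a"

text \<open>Morphisms A \<rightarrow> B in BA^S: subordination relations, axioms (S1)-(S4).\<close>
definition subordination :: "'a ba \<Rightarrow> 'b ba \<Rightarrow> ('a \<times> 'b) set \<Rightarrow> bool" where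
  "subordination A B S \<longleftrightarrow>
     S \<subseteq> carrier A \<times> carrier B \<and>
     (zero A, zero B) \<in> S \<and> (one A, one B) \<in> S \<and>
     (\<forall>a\<in>carrier A. \<forall>b\<in>carrier A. \<forall>c\<in>carrier B.
        (a, c) \<in> S \<longrightarrow> (b, c) \<in> S \<longrightarrow> (join A a b, c) \<in> S) \<and>
     (\<forall>a\<in>carrier A. \<forall>c\<in>carrier B. \<forall>d\<in>carrier B.
        (a, c) \<in> S \<longrightarrow> (a, d) \<in> S \<longrightarrow> (a, meet B c d) \<in> S) \<and>
     (\<forall>a\<in>carrier A. \<forall>b\<in>carrier A. \<forall>c\<in>carrier B. \<forall>d\<in>carrier B.
        ba_le A a b \<longrightarrow> (b, c) \<in> S \<longrightarrow> ba_le B c d \<longrightarrow> (a, d) \<in> S)"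

text \<open>Identity of BA^S is the order of A; composition is relational composition S O S'.\<close>
definition ba_id :: "'a ba \<Rightarrow> ('a \<times> 'a) set" where
  "ba_id A = {(a, b). a \<in> carrier A \<and> b \<in> carrier A \<and> ba_le A a b}"

definition subord_iso :: "'a ba \<Rightarrow> 'b ba \<Rightarrow> ('a \<times> 'b) set \<Rightarrow> bool" where
  "subord_iso A B S \<longleftrightarrow> subordination A B S \<and>
     (\<exists>S'. subordination B A S' \<and> S O S' = ba_id A \<and> S' O S = ba_id B)"

definition Clop :: "'x topology \<Rightarrow> 'x set ba" where
  "Clop X = \<lparr> carrier = {U. closedin X U \<and> openin X U},
              join = (\<union>), meet = (\<inter>), neg = (\<lambda>U. topspace X - U),
              zero = {}, one = topspace X \<rparr>"

definition Clop_rel :: "'x topology \<Rightarrow> 'y topology \<Rightarrow> ('x \<times> 'y) set \<Rightarrow> ('x set \<times> 'y set) set" where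
  "Clop_rel X Y R = {(U, V). U \<in> carrier (Clop X) \<and> V \<in> carrier (Clop Y) \<and> R `` U \<subseteq> V}"

definition ultrafilter_of :: "'a ba \<Rightarrow> 'a set \<Rightarrow> bool" where
  "ultrafilter_of A x \<longleftrightarrow>
     x \<subseteq> carrier A \<and> one A \<in> x \<and> zero A \<notin> x \<and>
     (\<forall>a\<in>x. \<forall>b\<in>x. meet A a b \<in> x) \<and>
     (\<forall>a\<in>x. \<forall>b\<in>carrier A. ba_le A a b \<longrightarrow> b \<in> x) \<and>
     (\<forall>a\<in>carrier A. a \<in> x \<or> neg A a \<in> x)"

definition stone_map :: "'a ba \<Rightarrow> 'a \<Rightarrow> 'a set set" where
  "stone_map A a = {x. ultrafilter_of A x \<and> a \<in> x}"

definition Ult :: "'a ba \<Rightarrow> 'a set topology" where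
  "Ult A = topology_generated_by (stone_map A ` carrier A)"

definition Ult_rel :: "'a ba \<Rightarrow> 'b ba \<Rightarrow> ('a \<times> 'b) set \<Rightarrow> ('a set \<times> 'b set) set" where
  "Ult_rel A B S = {(x, y). ultrafilter_of A x \<and> ultrafilter_of B y \<and> S `` x \<subseteq> y}"

definition eta_rel :: "'x topology \<Rightarrow> ('x \<times> 'x set set) set" where
  "eta_rel X = {(p, {U \<in> carrier (Clop X). p \<in> U}) | p. p \<in> topspace X}"

definition eps_rel :: "'a ba \<Rightarrow> ('a \<times> 'a set set) set" where
  "eps_rel A = {(a, U). a \<in> carrier A \<and> U \<in> carrier (Clop (Ult A)) \<and> stone_map A a \<subseteq> U}"

end

theory Submission
  imports Defs
begin

lemma is_ba_ax: assumes "is_ba A" shows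
  "zero A \<in> carrier A" "one A \<in> carrier A"
  "\<forall>a\<in>carrier A. neg A a \<in> carrier A"
  "\<forall>a\<in>carrier A. \<forall>b\<in>carrier A. join A a b \<in> carrier A \<and> meet A a b \<in> carrier A"
  "\<forall>a\<in>carrier A. \<forall>b\<in>carrier A.
        join A a b = join A b a \<and> meet A a b = meet A b a \<and>
        join A a (meet A a b) = a \<and> meet A a (join A a b) = a"
  "\<forall>a\<in>carrier A. \<forall>b\<in>carrier A. \<forall>c\<in>carrier A.
        join A a (join A b c) = join A (join A a b) c \<and>
        meet A a (meet A b c) = meet A (meet A a b) c \<and>
        meet A a (join A b c) = join A (meet A a b) (meet A a c)"
  "\<forall>a\<in>carrier A. join A a (neg A a) = one A \<and> meet A a (neg A a) = zero A"
  using assms unfolding is_ba_def by blast+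

locale BA = fixes A :: "'a ba" assumes ba: "is_ba A"
begin

abbreviation C where "C \<equiv> carrier A"

lemma zero_c[simp]: "zero A \<in> C" and one_c[simp]: "one A \<in> C"
  using is_ba_ax[OF ba] by blast+
lemma neg_c[simp]: "a \<in> C \<Longrightarrow> neg A a \<in> C"
  using is_ba_ax(3)[OF ba] by blast
lemma join_c[simp]: "a \<in> C \<Longrightarrow> b \<in> C \<Longrightarrow> join A a b \<in> C"
  using is_ba_ax(4)[OF ba] by blast
lemma meet_c[simp]: "a \<in> C \<Longrightarrow> b \<in> C \<Longrightarrow> meet A a b \<in> C"
  using is_ba_ax(4)[OF ba] by blast
lemma join_comm: "a \<in> C \<Longrightarrow> b \<in> C \<Longrightarrow> join A a b = join A b a"
  using is_ba_ax(5)[OF ba] by blast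
lemma meet_comm: "a \<in> C \<Longrightarrow> b \<in> C \<Longrightarrow> meet A a b = meet A b a"
  using is_ba_ax(5)[OF ba] by blast
lemma absorb1: "a \<in> C \<Longrightarrow> b \<in> C \<Longrightarrow> join A a (meet A a b) = a"
  using is_ba_ax(5)[OF ba] by blast
lemma absorb2: "a \<in> C \<Longrightarrow> b \<in> C \<Longrightarrow> meet A a (join A a b) = a"
  using is_ba_ax(5)[OF ba] by blast
lemma join_assoc: "a \<in> C \<Longrightarrow> b \<in> C \<Longrightarrow> c \<in> C \<Longrightarrow> join A (join A a b) c = join A a (join A b c)"
  using is_ba_ax(6)[OF ba] by (metis (no_types))
lemma meet_assoc: "a \<in> C \<Longrightarrow> b \<in> C \<Longrightarrow> c \<in> C \<Longrightarrow> meet A (meet A a b) c = meet A a (meet A b c)"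
  using is_ba_ax(6)[OF ba] by (metis (no_types))
lemma distrib: "a \<in> C \<Longrightarrow> b \<in> C \<Longrightarrow> c \<in> C \<Longrightarrow> meet A a (join A b c) = join A (meet A a b) (meet A a c)"
  using is_ba_ax(6)[OF ba] by blast
lemma compl_join: "a \<in> C \<Longrightarrow> join A a (neg A a) = one A"
  using is_ba_ax(7)[OF ba] by blast
lemma compl_meet: "a \<in> C \<Longrightarrow> meet A a (neg A a) = zero A"
  using is_ba_ax(7)[OF ba] by blast

lemma meet_idem[simp]: "a \<in> C \<Longrightarrow> meet A a a = a"
proof -
  assume a: "a \<in> C"
  have "meet A a a = meet A a (join A a (meet A a a))" using absorb1[OF a a] by simp
  also have "\<dots> = a" using absorb2[OF a] a by simp
  finally show ?thesis .
qed
lemma join_idem[simp]: "a \<in> C \<Longrightarrow> join A a a = a"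
proof -
  assume a: "a \<in> C"
  have "join A a a = join A a (meet A a (join A a a))" using absorb2[OF a a] by simp
  also have "\<dots> = a" using absorb1[OF a] a by simp
  finally show ?thesis .
qed

lemma meet_left_comm: "a \<in> C \<Longrightarrow> b \<in> C \<Longrightarrow> c \<in> C \<Longrightarrow> meet A a (meet A b c) = meet A b (meet A a c)"
  by (simp add: meet_assoc[symmetric] meet_comm[of a b])
lemma join_left_comm: "a \<in> C \<Longrightarrow> b \<in> C \<Longrightarrow> c \<in> C \<Longrightarrow> join A a (join A b c) = join A b (join A a c)"
  by (simp add: join_assoc[symmetric] join_comm[of a b])
lemma meet_left_idem[simp]: "a \<in> C \<Longrightarrow> b \<in> C \<Longrightarrow> meet A a (meet A a b) = meet A a b"
  by (simp add: meet_assoc[symmetric])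
lemma join_left_idem[simp]: "a \<in> C \<Longrightarrow> b \<in> C \<Longrightarrow> join A a (join A a b) = join A a b"
  by (simp add: join_assoc[symmetric])

lemmas meet_ac = meet_assoc meet_comm meet_left_comm
lemmas join_ac = join_assoc join_comm join_left_comm

lemma test: "a \<in> C \<Longrightarrow> b \<in> C \<Longrightarrow> c \<in> C \<Longrightarrow> meet A (meet A c a) (meet A b a) = meet A a (meet A b c)"
  by (simp add: meet_ac)

lemma meet_zero[simp]: "a \<in> C \<Longrightarrow> meet A a (zero A) = zero A"
proof -
  assume a: "a \<in> C"
  have "meet A a (zero A) = meet A a (meet A a (neg A a))" by (simp only: compl_meet[OF a])
  also have "\<dots> = meet A (meet A a a) (neg A a)" by (simp only: meet_assoc[OF a a neg_c[OF a]])
  also have "\<dots> = zero A" using a by (simp add: compl_meet)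
  finally show ?thesis .
qed
lemma zero_meet[simp]: "a \<in> C \<Longrightarrow> meet A (zero A) a = zero A"
  by (simp add: meet_comm[of "zero A" a])
lemma meet_one[simp]: "a \<in> C \<Longrightarrow> meet A a (one A) = a"
  using absorb2[of a "neg A a"] by (simp add: compl_join)
lemma one_meet[simp]: "a \<in> C \<Longrightarrow> meet A (one A) a = a"
  by (simp add: meet_comm[of "one A" a])
lemma join_zero[simp]: "a \<in> C \<Longrightarrow> join A a (zero A) = a"
  using absorb1[of a "neg A a"] by (simp add: compl_meet)
lemma zero_join[simp]: "a \<in> C \<Longrightarrow> join A (zero A) a = a"
  by (simp add: join_comm[of "zero A" a])
lemma join_one[simp]: "a \<in> C \<Longrightarrow> join A a (one A) = one A"
proof -
  assume a: "a \<in> C"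
  have "join A a (one A) = join A a (join A a (neg A a))" by (simp only: compl_join[OF a])
  also have "\<dots> = join A (join A a a) (neg A a)" by (simp only: join_assoc[OF a a neg_c[OF a]])
  also have "\<dots> = one A" using a by (simp add: compl_join)
  finally show ?thesis .
qed
lemma one_join[simp]: "a \<in> C \<Longrightarrow> join A (one A) a = one A"
  by (simp add: join_comm[of "one A" a])
lemma distrib_r: "a \<in> C \<Longrightarrow> b \<in> C \<Longrightarrow> c \<in> C \<Longrightarrow> meet A (join A b c) a = join A (meet A b a) (meet A c a)"
  by (simp add: meet_comm[of _ a] distrib)

lemma le_refl[simp]: "a \<in> C \<Longrightarrow> ba_le A a a" by (simp add: ba_le_def)
lemma le_trans: "a \<in> C \<Longrightarrow> b \<in> C \<Longrightarrow> c \<in> C \<Longrightarrow> ba_le A a b \<Longrightarrow> ba_le A b c \<Longrightarrow> ba_le A a c"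
  unfolding ba_le_def by (metis meet_assoc)
lemma le_antisym: "a \<in> C \<Longrightarrow> b \<in> C \<Longrightarrow> ba_le A a b \<Longrightarrow> ba_le A b a \<Longrightarrow> a = b"
  unfolding ba_le_def by (metis meet_comm)
lemma meet_le1[simp]: "a \<in> C \<Longrightarrow> b \<in> C \<Longrightarrow> ba_le A (meet A a b) a"
  unfolding ba_le_def by (simp add: meet_ac)
lemma meet_le2[simp]: "a \<in> C \<Longrightarrow> b \<in> C \<Longrightarrow> ba_le A (meet A a b) b"
  unfolding ba_le_def by (simp add: meet_ac)
lemma le_meetI: "x \<in> C \<Longrightarrow> a \<in> C \<Longrightarrow> b \<in> C \<Longrightarrow> ba_le A x a \<Longrightarrow> ba_le A x b \<Longrightarrow> ba_le A x (meet A a b)"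
  unfolding ba_le_def by (metis meet_assoc)
lemma le_join_iff: "a \<in> C \<Longrightarrow> b \<in> C \<Longrightarrow> ba_le A a b \<longleftrightarrow> join A a b = b"
  unfolding ba_le_def by (metis absorb1 absorb2 join_comm meet_comm)
lemma join_le1[simp]: "a \<in> C \<Longrightarrow> b \<in> C \<Longrightarrow> ba_le A a (join A a b)"
  by (simp add: le_join_iff join_assoc[symmetric])
lemma join_le2[simp]: "a \<in> C \<Longrightarrow> b \<in> C \<Longrightarrow> ba_le A b (join A a b)"
  by (simp add: le_join_iff join_left_comm[of b a b])
lemma join_leI: "x \<in> C \<Longrightarrow> a \<in> C \<Longrightarrow> b \<in> C \<Longrightarrow> ba_le A a x \<Longrightarrow> ba_le A b x \<Longrightarrow> ba_le A (join A a b) x"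
  by (simp add: le_join_iff join_assoc)
lemma meet_mono: "a \<in> C \<Longrightarrow> b \<in> C \<Longrightarrow> a' \<in> C \<Longrightarrow> b' \<in> C \<Longrightarrow> ba_le A a a' \<Longrightarrow> ba_le A b b' \<Longrightarrow> ba_le A (meet A a b) (meet A a' b')"
  by (meson le_meetI le_trans meet_c meet_le1 meet_le2)
lemma le_zero: "a \<in> C \<Longrightarrow> ba_le A a (zero A) \<Longrightarrow> a = zero A"
  unfolding ba_le_def by simp
lemma zero_le[simp]: "a \<in> C \<Longrightarrow> ba_le A (zero A) a"
  unfolding ba_le_def by simp
lemma le_one[simp]: "a \<in> C \<Longrightarrow> ba_le A a (one A)"
  unfolding ba_le_def by simp
lemma one_le: "a \<in> C \<Longrightarrow> ba_le A (one A) a \<Longrightarrow> a = one A"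
  unfolding ba_le_def by simp
lemma le_iff_meet_neg: "a \<in> C \<Longrightarrow> b \<in> C \<Longrightarrow> ba_le A a b \<longleftrightarrow> meet A a (neg A b) = zero A"
proof
  assume a: "a \<in> C" "b \<in> C" "ba_le A a b"
  then have "meet A a (neg A b) = meet A (meet A a b) (neg A b)" by (simp add: ba_le_def)
  also have "\<dots> = zero A" using a by (simp add: meet_assoc compl_meet)
  finally show "meet A a (neg A b) = zero A" .
next
  assume a: "a \<in> C" "b \<in> C" "meet A a (neg A b) = zero A"
  have "a = meet A a (join A b (neg A b))" using a by (simp add: compl_join)
  also have "\<dots> = meet A a b" using a by (simp add: distrib)
  finally show "ba_le A a b" by (simp add: ba_le_def)
qed

lemma split_neg: "g \<in> C \<Longrightarrow> a \<in> C \<Longrightarrow> g = join A (meet A g a) (meet A g (neg A a))"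
  by (simp add: compl_join distrib[symmetric])

lemma join_neg_zero: "a \<in> C \<Longrightarrow> b \<in> C \<Longrightarrow> meet A (join A a b) (meet A (neg A a) (neg A b)) = zero A"
proof -
  assume a: "a \<in> C" "b \<in> C"
  have "meet A (join A a b) (meet A (neg A a) (neg A b))
       = join A (meet A a (meet A (neg A a) (neg A b))) (meet A b (meet A (neg A a) (neg A b)))"
    using a by (simp add: distrib_r)
  also have "meet A a (meet A (neg A a) (neg A b)) = zero A"
    using a by (simp add: meet_assoc[symmetric] compl_meet)
  also have "meet A b (meet A (neg A a) (neg A b)) = zero A"
    using a by (simp add: meet_left_comm[of b "neg A a"] compl_meet)
  finally show ?thesis using a by simp
qed

end


context BA begin

lemma uf_sub: "ultrafilter_of A x \<Longrightarrow> x \<subseteq> C" by (simp add: ultrafilter_of_def)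
lemma uf_one: "ultrafilter_of A x \<Longrightarrow> one A \<in> x" by (simp add: ultrafilter_of_def)
lemma uf_zero: "ultrafilter_of A x \<Longrightarrow> zero A \<notin> x" by (simp add: ultrafilter_of_def)
lemma uf_up: "ultrafilter_of A x \<Longrightarrow> a \<in> x \<Longrightarrow> b \<in> C \<Longrightarrow> ba_le A a b \<Longrightarrow> b \<in> x"
  unfolding ultrafilter_of_def by blast
lemma uf_meet: "ultrafilter_of A x \<Longrightarrow> a \<in> C \<Longrightarrow> b \<in> C \<Longrightarrow> meet A a b \<in> x \<longleftrightarrow> a \<in> x \<and> b \<in> x"
  unfolding ultrafilter_of_def by (meson meet_le1 meet_le2 meet_c)
lemma uf_neg: "ultrafilter_of A x \<Longrightarrow> a \<in> C \<Longrightarrow> neg A a \<in> x \<longleftrightarrow> a \<notin> x"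
proof -
  assume u: "ultrafilter_of A x" and a: "a \<in> C"
  show ?thesis
  proof
    assume "neg A a \<in> x"
    then show "a \<notin> x" using u a uf_meet[OF u a neg_c[OF a]] uf_zero[OF u] by (simp add: compl_meet)
  next
    assume "a \<notin> x" then show "neg A a \<in> x" using u a unfolding ultrafilter_of_def by blast
  qed
qed
lemma uf_join: "ultrafilter_of A x \<Longrightarrow> a \<in> C \<Longrightarrow> b \<in> C \<Longrightarrow> join A a b \<in> x \<longleftrightarrow> a \<in> x \<or> b \<in> x"
proof -
  assume u: "ultrafilter_of A x" and a: "a \<in> C" and b: "b \<in> C"
  show ?thesis
  proof
    assume j: "join A a b \<in> x"
    show "a \<in> x \<or> b \<in> x"
    proof (rule ccontr)
      assume "\<not> (a \<in> x \<or> b \<in> x)"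
      then have "neg A a \<in> x" "neg A b \<in> x" using uf_neg[OF u] a b by auto
      then have "meet A (join A a b) (meet A (neg A a) (neg A b)) \<in> x"
        using j u a b by (simp add: uf_meet)
      then show False using join_neg_zero[OF a b] uf_zero[OF u] by simp
    qed
  next
    assume "a \<in> x \<or> b \<in> x" then show "join A a b \<in> x"
      using u a b uf_up[OF u] by (meson join_c join_le1 join_le2)
  qed
qed
lemma uf_subset_eq: "ultrafilter_of A x \<Longrightarrow> ultrafilter_of A y \<Longrightarrow> x \<subseteq> y \<Longrightarrow> x = y"
proof -
  assume u: "ultrafilter_of A x" and v: "ultrafilter_of A y" and s: "x \<subseteq> y"
  show "x = y"
  proof (rule ccontr)
    assume "x \<noteq> y"
    then obtain a where "a \<in> y" "a \<notin> x" using s by blast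
    moreover have a: "a \<in> C" using uf_sub[OF v] \<open>a \<in> y\<close> by blast
    ultimately have "neg A a \<in> y" using uf_neg[OF u a] s by blast
    then show False using uf_neg[OF v a] \<open>a \<in> y\<close> by blast
  qed
qed

lemma pft:
  assumes F: "F \<subseteq> C" "F \<noteq> {}" "\<forall>a\<in>F. \<forall>b\<in>F. meet A a b \<in> F" "\<forall>a\<in>F. \<forall>b\<in>C. ba_le A a b \<longrightarrow> b \<in> F"
  and J: "J \<subseteq> C" "zero A \<in> J" "\<forall>a\<in>J. \<forall>b\<in>J. join A a b \<in> J" "\<forall>a\<in>J. \<forall>b\<in>C. ba_le A b a \<longrightarrow> b \<in> J"
  and FJ: "F \<inter> J = {}"
  shows "\<exists>x. ultrafilter_of A x \<and> F \<subseteq> x \<and> x \<inter> J = {}"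
proof -
  define P where "P x \<longleftrightarrow> F \<subseteq> x \<and> x \<subseteq> C \<and> (\<forall>a\<in>x. \<forall>b\<in>x. meet A a b \<in> x) \<and>
     (\<forall>a\<in>x. \<forall>b\<in>C. ba_le A a b \<longrightarrow> b \<in> x) \<and> x \<inter> J = {}" for x
  define \<A> where "\<A> = Collect P"
  have ne: "\<A> \<noteq> {}" using F FJ unfolding \<A>_def P_def by blast
  have ch: "\<Union>\<C> \<in> \<A>" if "\<C> \<noteq> {}" "subset.chain \<A> \<C>" for \<C>
  proof -
    have sub: "\<C> \<subseteq> \<A>" and lin: "\<forall>x\<in>\<C>. \<forall>y\<in>\<C>. x \<subseteq> y \<or> y \<subseteq> x"
      using that(2) unfolding subset.chain_def by blast+
    have Pc: "P x" if "x \<in> \<C>" for x using sub that unfolding \<A>_def by blast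
    have "F \<subseteq> \<Union>\<C>" using Pc that(1) unfolding P_def by blast
    moreover have "\<Union>\<C> \<subseteq> C" using Pc unfolding P_def by blast
    moreover have "\<forall>a\<in>\<Union>\<C>. \<forall>b\<in>\<Union>\<C>. meet A a b \<in> \<Union>\<C>"
    proof (intro ballI)
      fix a b assume "a \<in> \<Union>\<C>" "b \<in> \<Union>\<C>"
      then obtain x y where "x \<in> \<C>" "y \<in> \<C>" "a \<in> x" "b \<in> y" by blast
      then show "meet A a b \<in> \<Union>\<C>" using lin Pc unfolding P_def by (metis UnionI subsetD)
    qed
    moreover have "\<forall>a\<in>\<Union>\<C>. \<forall>b\<in>C. ba_le A a b \<longrightarrow> b \<in> \<Union>\<C>"
      using Pc unfolding P_def by blast
    moreover have "\<Union>\<C> \<inter> J = {}" using Pc unfolding P_def by blast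
    ultimately show ?thesis unfolding \<A>_def P_def by simp
  qed
  obtain M where M: "M \<in> \<A>" and max: "\<forall>X\<in>\<A>. M \<subseteq> X \<longrightarrow> X = M"
    using subset_Zorn_nonempty[OF ne ch] by blast
  have PM: "P M" using M unfolding \<A>_def by simp
  have MC: "M \<subseteq> C" and Mmeet: "\<forall>a\<in>M. \<forall>b\<in>M. meet A a b \<in> M"
    and Mup: "\<forall>a\<in>M. \<forall>b\<in>C. ba_le A a b \<longrightarrow> b \<in> M" and MJ: "M \<inter> J = {}" and FM: "F \<subseteq> M"
    using PM unfolding P_def by auto
  obtain f0 where "f0 \<in> F" using F(2) by blast
  then have f0: "f0 \<in> M" "f0 \<in> C" using FM MC by auto
  then have "ba_le A f0 (one A)" by simp
  then have oneM: "one A \<in> M" using Mup f0 one_c by blast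
  have zM: "zero A \<notin> M" using MJ J by blast
  have ext: "\<exists>f\<in>M. meet A f a \<in> J" if a: "a \<in> C" "a \<notin> M" for a
  proof (rule ccontr)
    assume nex: "\<not> (\<exists>f\<in>M. meet A f a \<in> J)"
    define Ma where "Ma = {b \<in> C. \<exists>f\<in>M. ba_le A (meet A f a) b}"
    have "P Ma" unfolding P_def
    proof (intro conjI)
      show "F \<subseteq> Ma" using FM MC a unfolding Ma_def by (auto intro!: bexI[of _ ] meet_le1)
      show "Ma \<subseteq> C" unfolding Ma_def by blast
      show "\<forall>x\<in>Ma. \<forall>y\<in>Ma. meet A x y \<in> Ma"
      proof (intro ballI)
        fix x y assume "x \<in> Ma" "y \<in> Ma"
        then obtain f g where fg: "f \<in> M" "g \<in> M" "x \<in> C" "y \<in> C"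
          "ba_le A (meet A f a) x" "ba_le A (meet A g a) y" unfolding Ma_def by blast
        have fgC: "f \<in> C" "g \<in> C" using fg MC by auto
        have "ba_le A (meet A (meet A f g) a) (meet A f a)"
          using fgC a by (intro meet_mono) auto
        moreover have "ba_le A (meet A (meet A f g) a) (meet A g a)"
          using fgC a by (intro meet_mono) auto
        ultimately have "ba_le A (meet A (meet A f g) a) x" "ba_le A (meet A (meet A f g) a) y"
          using le_trans[of "meet A (meet A f g) a" "meet A f a" x] le_trans[of "meet A (meet A f g) a" "meet A g a" y]
            fg fgC a by simp_all
        then have "ba_le A (meet A (meet A f g) a) (meet A x y)"
          using le_meetI[of "meet A (meet A f g) a" x y] fg fgC a by simp
        then show "meet A x y \<in> Ma" unfolding Ma_def using fg Mmeet by auto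
      qed
      show "\<forall>x\<in>Ma. \<forall>y\<in>C. ba_le A x y \<longrightarrow> y \<in> Ma"
      proof (intro ballI impI)
        fix x y assume "x \<in> Ma" "y \<in> C" "ba_le A x y"
        then obtain f where f: "f \<in> M" "x \<in> C" "ba_le A (meet A f a) x" unfolding Ma_def by blast
        then have "f \<in> C" using MC by blast
        then have "ba_le A (meet A f a) y" using le_trans[of "meet A f a" x y] f a \<open>y \<in> C\<close> \<open>ba_le A x y\<close> by simp
        then show "y \<in> Ma" unfolding Ma_def using f \<open>y \<in> C\<close> by blast
      qed
      show "Ma \<inter> J = {}"
      proof (rule ccontr)
        assume "Ma \<inter> J \<noteq> {}"
        then obtain b f where "b \<in> J" "b \<in> C" "f \<in> M" "ba_le A (meet A f a) b" unfolding Ma_def by blast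
        moreover have "meet A f a \<in> C" using \<open>f \<in> M\<close> MC a by auto
        ultimately have "meet A f a \<in> J" using J(4) by blast
        then show False using nex \<open>f \<in> M\<close> by blast
      qed
    qed
    moreover have "M \<subseteq> Ma" using MC a unfolding Ma_def by (auto intro: meet_le1)
    ultimately have "Ma = M" using max unfolding \<A>_def by auto
    moreover have "a \<in> Ma"
    proof -
      have "ba_le A (meet A (one A) a) a" using a(1) by simp
      then show "a \<in> Ma" unfolding Ma_def using oneM a(1) by blast
    qed
    ultimately have "a \<in> M" by (simp only:)
    then show False using a(2) by (rule notE[rotated])
  qed
  have "ultrafilter_of A M" unfolding ultrafilter_of_def
  proof (intro conjI)
    show "\<forall>a\<in>C. a \<in> M \<or> neg A a \<in> M"
    proof (intro ballI)
      fix a assume a: "a \<in> C"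
      show "a \<in> M \<or> neg A a \<in> M"
      proof (rule ccontr)
        assume "\<not> (a \<in> M \<or> neg A a \<in> M)"
        then have n1: "a \<notin> M" and n2: "neg A a \<notin> M" by simp_all
        obtain f where f: "f \<in> M" "meet A f a \<in> J" using ext[OF a n1] by blast
        obtain g where g: "g \<in> M" "meet A g (neg A a) \<in> J" using ext[OF neg_c[OF a] n2] by blast
        note fg = f(1) g(1) f(2) g(2)
        have fgC: "f \<in> C" "g \<in> C" using fg MC by auto
        define h where "h = meet A f g"
        have hC: "h \<in> C" using fgC unfolding h_def by simp
        have "ba_le A (meet A h a) (meet A f a)"
          using meet_mono[of h a f a] fgC a hC unfolding h_def by simp
        then have "meet A h a \<in> J" using J(4) fg(3) hC a meet_c by blast
        moreover have "ba_le A (meet A h (neg A a)) (meet A g (neg A a))"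
          using meet_mono[of h "neg A a" g "neg A a"] fgC a hC unfolding h_def by simp
        then have "meet A h (neg A a) \<in> J" using J(4) fg(4) hC a meet_c neg_c by blast
        ultimately have "join A (meet A h a) (meet A h (neg A a)) \<in> J" using J by blast
        moreover have eq: "join A (meet A h a) (meet A h (neg A a)) = h" using split_neg[OF hC a] by (rule sym)
        ultimately have "h \<in> J" by simp
        moreover have "h \<in> M" using fg Mmeet unfolding h_def by blast
        ultimately show False using MJ by blast
      qed
    qed
  qed (use MC oneM zM Mmeet Mup in auto)
  then show ?thesis using FM MJ by blast
qed

definition upset where "upset d = {c \<in> C. ba_le A d c}"

lemma upset_filter: assumes d: "d \<in> C" shows
  "upset d \<subseteq> C" "upset d \<noteq> {}" "\<forall>a\<in>upset d. \<forall>b\<in>upset d. meet A a b \<in> upset d"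
  "\<forall>a\<in>upset d. \<forall>b\<in>C. ba_le A a b \<longrightarrow> b \<in> upset d" "d \<in> upset d"
  unfolding upset_def using d by (auto intro: le_meetI le_trans)

lemma uf_exists_not_le:
  assumes a: "a \<in> C" and b: "b \<in> C" and nle: "\<not> ba_le A a b"
  shows "\<exists>x. ultrafilter_of A x \<and> a \<in> x \<and> b \<notin> x"
proof -
  define d where "d = meet A a (neg A b)"
  have dC: "d \<in> C" using a b unfolding d_def by simp
  have dz: "d \<noteq> zero A" using le_iff_meet_neg[OF a b] nle unfolding d_def by simp
  have "upset d \<inter> {zero A} = {}" using dz le_zero dC unfolding upset_def by auto
  then obtain x where x: "ultrafilter_of A x" "upset d \<subseteq> x"
    using pft[OF upset_filter(1-4)[OF dC], of "{zero A}"] le_zero by auto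
  then have "d \<in> x" using upset_filter(5)[OF dC] by blast
  then have "a \<in> x" "neg A b \<in> x" using uf_meet[OF x(1) a neg_c[OF b]] unfolding d_def by auto
  then show ?thesis using x uf_neg[OF x(1) b] by blast
qed

end


inductive_set igen :: "'a ba \<Rightarrow> 'a set \<Rightarrow> 'a set" for A :: "'a ba" and G :: "'a set" where
  igen_zero: "zero A \<in> igen A G"
| igen_base: "c \<in> G \<Longrightarrow> c \<in> igen A G"
| igen_join: "a \<in> igen A G \<Longrightarrow> b \<in> igen A G \<Longrightarrow> join A a b \<in> igen A G"
| igen_down: "a \<in> igen A G \<Longrightarrow> b \<in> carrier A \<Longrightarrow> ba_le A b a \<Longrightarrow> b \<in> igen A G"

context BA begin

definition ufs where "ufs = {x. ultrafilter_of A x}"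

lemma stone_map_sub: "stone_map A a \<subseteq> ufs"
  unfolding stone_map_def ufs_def by auto

lemma stone_map_one: "stone_map A (one A) = ufs"
  unfolding stone_map_def ufs_def using uf_one by auto
lemma stone_map_zero: "stone_map A (zero A) = {}"
  unfolding stone_map_def using uf_zero by auto
lemma stone_map_meet: "a \<in> C \<Longrightarrow> b \<in> C \<Longrightarrow> stone_map A (meet A a b) = stone_map A a \<inter> stone_map A b"
  unfolding stone_map_def using uf_meet by auto
lemma stone_map_join: "a \<in> C \<Longrightarrow> b \<in> C \<Longrightarrow> stone_map A (join A a b) = stone_map A a \<union> stone_map A b"
  unfolding stone_map_def using uf_join by auto
lemma stone_map_neg: "a \<in> C \<Longrightarrow> stone_map A (neg A a) = ufs - stone_map A a"
  unfolding stone_map_def ufs_def using uf_neg by auto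
lemma stone_map_mono: "a \<in> C \<Longrightarrow> b \<in> C \<Longrightarrow> ba_le A a b \<Longrightarrow> stone_map A a \<subseteq> stone_map A b"
  unfolding stone_map_def using uf_up by auto
lemma stone_map_le_iff: "a \<in> C \<Longrightarrow> b \<in> C \<Longrightarrow> stone_map A a \<subseteq> stone_map A b \<longleftrightarrow> ba_le A a b"
  using stone_map_mono uf_exists_not_le unfolding stone_map_def by blast

lemma topspace_Ult: "topspace (Ult A) = ufs"
proof -
  have "\<Union>(stone_map A ` C) = ufs"
    using stone_map_sub stone_map_one one_c by blast
  then show ?thesis unfolding Ult_def by simp
qed

lemma open_stone_map: "a \<in> C \<Longrightarrow> openin (Ult A) (stone_map A a)"
  unfolding Ult_def by (rule topology_generated_by_Basis) simp

lemma closed_stone_map: "a \<in> C \<Longrightarrow> closedin (Ult A) (stone_map A a)"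
  unfolding closedin_def topspace_Ult
  using stone_map_sub open_stone_map[of "neg A a"] stone_map_neg by simp

lemma openin_Ult: "openin (Ult A) U \<longleftrightarrow> U \<subseteq> ufs \<and> (\<forall>x\<in>U. \<exists>a\<in>C. x \<in> stone_map A a \<and> stone_map A a \<subseteq> U)"
proof
  assume o: "openin (Ult A) U"
  have "U \<subseteq> ufs" using openin_subset[OF o] topspace_Ult by simp
  moreover have "generate_topology_on (stone_map A ` C) U"
    using o unfolding Ult_def by (rule openin_topology_generated_by)
  then have "\<forall>x\<in>U. \<exists>a\<in>C. x \<in> stone_map A a \<and> stone_map A a \<subseteq> U"
  proof (induction rule: generate_topology_on.induct)
    case Empty then show ?case by simp
  next
    case (Int a b)
    show ?case
    proof
      fix x assume "x \<in> a \<inter> b"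
      then obtain c d where "c \<in> C" "d \<in> C" "x \<in> stone_map A c" "stone_map A c \<subseteq> a"
        "x \<in> stone_map A d" "stone_map A d \<subseteq> b" using Int.IH by blast
      then show "\<exists>e\<in>C. x \<in> stone_map A e \<and> stone_map A e \<subseteq> a \<inter> b"
        by (intro bexI[of _ "meet A c d"]) (auto simp: stone_map_meet)
    qed
  next
    case (UN K) then show ?case by blast
  next
    case (Basis s) then show ?case by blast
  qed
  ultimately show "U \<subseteq> ufs \<and> (\<forall>x\<in>U. \<exists>a\<in>C. x \<in> stone_map A a \<and> stone_map A a \<subseteq> U)" by blast
next
  assume r: "U \<subseteq> ufs \<and> (\<forall>x\<in>U. \<exists>a\<in>C. x \<in> stone_map A a \<and> stone_map A a \<subseteq> U)"
  have "U = \<Union>{stone_map A a | a. a \<in> C \<and> stone_map A a \<subseteq> U}" using r by blast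
  moreover have "openin (Ult A) (\<Union>{stone_map A a | a. a \<in> C \<and> stone_map A a \<subseteq> U})"
    by (rule openin_Union) (auto intro: open_stone_map)
  ultimately show "openin (Ult A) U" by simp
qed

lemma igen_sub: assumes G: "G \<subseteq> C" shows "igen A G \<subseteq> C"
proof
  fix b assume "b \<in> igen A G"
  then show "b \<in> C" by (induction rule: igen.induct) (use G in auto)
qed

lemma igen_cover: assumes G: "G \<subseteq> C" and b: "b \<in> igen A G"
  shows "\<exists>G0. finite G0 \<and> G0 \<subseteq> G \<and> stone_map A b \<subseteq> \<Union>(stone_map A ` G0)"
  using b
proof (induction rule: igen.induct)
  case igen_zero then show ?case by (intro exI[of _ "{}"]) (simp add: stone_map_zero)
next
  case (igen_base c) then show ?case by (intro exI[of _ "{c}"]) simp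
next
  case (igen_join a b)
  then obtain G1 G2 where "finite G1" "G1 \<subseteq> G" "stone_map A a \<subseteq> \<Union>(stone_map A ` G1)"
    "finite G2" "G2 \<subseteq> G" "stone_map A b \<subseteq> \<Union>(stone_map A ` G2)" by blast
  moreover have "a \<in> C" "b \<in> C" using igen_sub[OF G] igen_join.hyps by auto
  ultimately show ?case by (intro exI[of _ "G1 \<union> G2"]) (auto simp: stone_map_join)
next
  case (igen_down a b)
  then obtain G1 where "finite G1" "G1 \<subseteq> G" "stone_map A a \<subseteq> \<Union>(stone_map A ` G1)" by blast
  moreover have "a \<in> C" using igen_sub[OF G] igen_down.hyps by auto
  ultimately show ?case using stone_map_mono[of b a] igen_down.hyps by (intro exI[of _ G1]) auto
qed

lemma compact_Ult: "compact_space (Ult A)"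
  unfolding compact_space_alt topspace_Ult
proof (intro allI impI)
  fix \<U> assume a: "(\<forall>U\<in>\<U>. openin (Ult A) U) \<and> ufs \<subseteq> \<Union>\<U>"
  define G where "G = {a \<in> C. \<exists>U\<in>\<U>. stone_map A a \<subseteq> U}"
  have GC: "G \<subseteq> C" unfolding G_def by blast
  show "\<exists>\<F>. finite \<F> \<and> \<F> \<subseteq> \<U> \<and> ufs \<subseteq> \<Union>\<F>"
  proof (cases "one A \<in> igen A G")
    case True
    then obtain G0 where G0: "finite G0" "G0 \<subseteq> G" "ufs \<subseteq> \<Union>(stone_map A ` G0)"
      using igen_cover[OF GC] stone_map_one by metis
    have "\<forall>a\<in>G0. \<exists>U\<in>\<U>. stone_map A a \<subseteq> U" using G0 unfolding G_def by blast
    then obtain f where f: "\<forall>a\<in>G0. f a \<in> \<U> \<and> stone_map A a \<subseteq> f a" by metis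
    show ?thesis using G0 f by (intro exI[of _ "f ` G0"]) blast
  next
    case False
    have disj: "upset (one A) \<inter> igen A G = {}"
      using False one_le unfolding upset_def by auto
    have J3: "\<forall>a\<in>igen A G. \<forall>b\<in>igen A G. join A a b \<in> igen A G" by (blast intro: igen_join)
    have J4: "\<forall>a\<in>igen A G. \<forall>b\<in>C. ba_le A b a \<longrightarrow> b \<in> igen A G" by (blast intro: igen_down)
    obtain x where x: "ultrafilter_of A x" "x \<inter> igen A G = {}"
      using pft[OF upset_filter(1-4)[OF one_c] igen_sub[OF GC] igen_zero J3 J4 disj] by blast
    then have "x \<in> ufs" unfolding ufs_def by simp
    then obtain U where "U \<in> \<U>" "x \<in> U" using a by blast
    then obtain c where "c \<in> C" "x \<in> stone_map A c" "stone_map A c \<subseteq> U"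
      using a openin_Ult by meson
    then have "c \<in> G" "c \<in> x" unfolding G_def stone_map_def using \<open>U \<in> \<U>\<close> by auto
    then have "c \<in> x \<inter> igen A G" by (simp add: igen_base)
    then have False using x(2) by simp
    then show ?thesis by (rule FalseE)
  qed
qed

lemma Hausdorff_Ult: "Hausdorff_space (Ult A)"
  unfolding Hausdorff_space_def topspace_Ult
proof (intro allI impI)
  fix x y assume a: "x \<in> ufs \<and> y \<in> ufs \<and> x \<noteq> y"
  then have ux: "ultrafilter_of A x" and uy: "ultrafilter_of A y" unfolding ufs_def by auto
  then have "\<not> x \<subseteq> y" using a uf_subset_eq by blast
  then obtain c where c: "c \<in> x" "c \<notin> y" by blast
  then have cC: "c \<in> C" using uf_sub[OF ux] by blast
  have "openin (Ult A) (stone_map A c)" using cC by (rule open_stone_map)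
  moreover have "openin (Ult A) (stone_map A (neg A c))" using cC by (simp add: open_stone_map)
  moreover have "x \<in> stone_map A c" using c ux unfolding stone_map_def by simp
  moreover have "y \<in> stone_map A (neg A c)" using c cC uy uf_neg[OF uy cC] unfolding stone_map_def by simp
  moreover have "disjnt (stone_map A c) (stone_map A (neg A c))"
    using stone_map_neg[OF cC] unfolding disjnt_def by simp
  ultimately show "\<exists>U V. openin (Ult A) U \<and> openin (Ult A) V \<and> x \<in> U \<and> y \<in> V \<and> disjnt U V"
    by blast
qed

lemma dim_Ult: "Ult A dim_le 0"
  unfolding dimension_le_0_neighbourhood_base_of_clopen neighbourhood_base_of
proof (intro allI impI)
  fix W x assume "openin (Ult A) W \<and> x \<in> W"
  then obtain c where "c \<in> C" "x \<in> stone_map A c" "stone_map A c \<subseteq> W" using openin_Ult by meson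
  moreover have "openin (Ult A) (stone_map A c)" "closedin (Ult A) (stone_map A c)"
    using calculation(1) by (simp_all add: open_stone_map closed_stone_map)
  ultimately show "\<exists>U V. openin (Ult A) U \<and> (closedin (Ult A) V \<and> openin (Ult A) V) \<and> x \<in> U \<and> U \<subseteq> V \<and> V \<subseteq> W"
    by blast
qed

lemma stone_Ult: "stone_space (Ult A)"
  unfolding stone_space_def using compact_Ult Hausdorff_Ult dim_Ult by blast

lemma finite_join_stone: "finite G0 \<Longrightarrow> G0 \<subseteq> C \<Longrightarrow> \<exists>c\<in>C. stone_map A c = \<Union>(stone_map A ` G0)"
proof (induction G0 rule: finite_induct)
  case empty then show ?case using stone_map_zero zero_c by auto
next
  case (insert a G0)
  then obtain c where "c \<in> C" "stone_map A c = \<Union>(stone_map A ` G0)" by auto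
  moreover have "a \<in> C" using insert by auto
  ultimately show ?case by (intro bexI[of _ "join A a c"]) (auto simp: stone_map_join)
qed

lemma clopen_Ult: assumes "closedin (Ult A) U" "openin (Ult A) U" shows "\<exists>a\<in>C. U = stone_map A a"
proof -
  have K: "compactin (Ult A) U" using closedin_compact_space[OF compact_Ult assms(1)] .
  define \<U> where "\<U> = stone_map A ` {a \<in> C. stone_map A a \<subseteq> U}"
  have "U \<subseteq> \<Union>\<U>" using assms(2) openin_Ult unfolding \<U>_def by blast
  moreover have "\<forall>V\<in>\<U>. openin (Ult A) V" unfolding \<U>_def using open_stone_map by blast
  ultimately obtain \<F> where F: "finite \<F>" "\<F> \<subseteq> \<U>" "U \<subseteq> \<Union>\<F>" using K compactinD by metis
  then obtain G0 where G0: "G0 \<subseteq> {a \<in> C. stone_map A a \<subseteq> U}" "finite G0" "\<F> = stone_map A ` G0"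
    unfolding \<U>_def by (meson finite_subset_image)
  then obtain c where "c \<in> C" "stone_map A c = \<Union>\<F>" using finite_join_stone[of G0] by auto
  moreover have "\<Union>\<F> = U" using F G0 by auto
  ultimately show ?thesis by auto
qed

lemma carrier_Clop_Ult: "carrier (Clop (Ult A)) = stone_map A ` C"
  unfolding Clop_def using clopen_Ult open_stone_map closed_stone_map by auto

end


lemma clopen_base: assumes "stone_space X" "openin X W" "p \<in> W"
  shows "\<exists>U. closedin X U \<and> openin X U \<and> p \<in> U \<and> U \<subseteq> W"
proof -
  have "neighbourhood_base_of (\<lambda>U. closedin X U \<and> openin X U) X"
    using assms(1) unfolding stone_space_def dimension_le_0_neighbourhood_base_of_clopen by blast
  then show ?thesis using assms(2,3) unfolding neighbourhood_base_of by blast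
qed

lemma clopen_between: assumes X: "stone_space X" and K: "closedin X K" and W: "openin X W" and KW: "K \<subseteq> W"
  shows "\<exists>U. closedin X U \<and> openin X U \<and> K \<subseteq> U \<and> U \<subseteq> W"
proof -
  have cK: "compactin X K" using X K closedin_compact_space unfolding stone_space_def by blast
  define \<U> where "\<U> = {U. closedin X U \<and> openin X U \<and> U \<subseteq> W}"
  have "K \<subseteq> \<Union>\<U>" using clopen_base[OF X W] KW unfolding \<U>_def by blast
  then obtain \<F> where F: "finite \<F>" "\<F> \<subseteq> \<U>" "K \<subseteq> \<Union>\<F>"
    using compactinD[OF cK, of \<U>] unfolding \<U>_def by blast
  have "closedin X (\<Union>\<F>)" using F unfolding \<U>_def by (intro closedin_Union) auto
  moreover have "openin X (\<Union>\<F>)" using F unfolding \<U>_def by (intro openin_Union) auto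
  ultimately show ?thesis using F unfolding \<U>_def by (intro exI[of _ "\<Union>\<F>"]) auto
qed

lemma separate_points: assumes X: "stone_space X" and p: "p \<in> topspace X" and q: "q \<in> topspace X" and pq: "p \<noteq> q"
  shows "\<exists>U. closedin X U \<and> openin X U \<and> p \<in> U \<and> q \<notin> U"
proof -
  have "t1_space X" using X Hausdorff_imp_t1_space unfolding stone_space_def by blast
  then have "closedin X {q}" using q by (simp add: t1_space_closedin_singleton)
  then have "openin X (topspace X - {q})" by blast
  then show ?thesis using clopen_base[OF X, of "topspace X - {q}" p] p pq by blast
qed

lemma rel_image_closed: assumes R: "closed_rel X Y R" and X: "compact_space X" and F: "closedin X F"
  shows "closedin Y (R `` F)"
proof -
  have sub: "R \<subseteq> topspace X \<times> topspace Y" and cR: "closedin (prod_topology X Y) R"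
    using R unfolding closed_rel_def by auto
  have "R `` F = snd ` (R \<inter> (F \<times> topspace Y))" using sub by force
  moreover have "closedin (prod_topology X Y) (R \<inter> (F \<times> topspace Y))"
    using cR F by (intro closedin_Int) (auto simp: closedin_prod_Times_iff)
  ultimately show ?thesis using closed_map_snd[OF X, of Y] unfolding closed_map_def by metis
qed

lemma rel_preimage_open: assumes R: "closed_rel Y Z R" and Z: "compact_space Z" and W: "openin Z W"
  shows "openin Y {y \<in> topspace Y. R `` {y} \<subseteq> W}"
proof -
  have sub: "R \<subseteq> topspace Y \<times> topspace Z" and cR: "closedin (prod_topology Y Z) R"
    using R unfolding closed_rel_def by auto
  have eq: "topspace Y - {y \<in> topspace Y. R `` {y} \<subseteq> W} = fst ` (R \<inter> (topspace Y \<times> (topspace Z - W)))"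
    using sub by force
  have "closedin (prod_topology Y Z) (R \<inter> (topspace Y \<times> (topspace Z - W)))"
    using cR W by (intro closedin_Int) (auto simp: closedin_prod_Times_iff)
  then have "closedin Y (topspace Y - {y \<in> topspace Y. R `` {y} \<subseteq> W})"
    using closed_map_fst[OF Z, of Y] unfolding closed_map_def eq by metis
  then show ?thesis unfolding openin_closedin_eq by auto
qed

lemma closed_rel_converse: assumes "closed_rel X Y R" shows "closed_rel Y X (converse R)"
proof -
  have "converse R = (\<lambda>(x,y). (y,x)) ` R" by force
  moreover have "closed_map (prod_topology X Y) (prod_topology Y X) (\<lambda>(x,y). (y,x))"
    by (rule homeomorphic_imp_closed_map[OF homeomorphic_map_swap])
  ultimately have "closedin (prod_topology Y X) (converse R)"
    using assms unfolding closed_rel_def closed_map_def by metis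
  then show ?thesis using assms unfolding closed_rel_def by auto
qed

lemma ba_le_Clop: "ba_le (Clop X) U V \<longleftrightarrow> U \<subseteq> V"
  unfolding ba_le_def Clop_def by auto

lemma carrier_Clop: "carrier (Clop X) = {U. closedin X U \<and> openin X U}"
  unfolding Clop_def by simp

lemma is_ba_Clop: "is_ba (Clop X)"
proof -
  have s: "U \<subseteq> topspace X" if "closedin X U" for U using that closedin_subset by blast
  show ?thesis unfolding is_ba_def Clop_def
    by (auto intro: closedin_Un openin_Un closedin_Int openin_Int closedin_diff openin_diff dest: s)
qed

lemma subord_Clop_rel: assumes "closed_rel X Y R"
  shows "subordination (Clop X) (Clop Y) (Clop_rel X Y R)"
proof -
  have sub: "R \<subseteq> topspace X \<times> topspace Y" using assms unfolding closed_rel_def by auto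
  show ?thesis unfolding subordination_def Clop_rel_def ba_le_Clop
    using sub by (auto simp: Clop_def)
qed

lemma Clop_rel_id: "Clop_rel X X (stone_id X) = ba_id (Clop X)"
  unfolding Clop_rel_def ba_id_def stone_id_def ba_le_Clop
  by (auto simp: Clop_def dest: closedin_subset)

lemma Clop_rel_comp: assumes X: "stone_space X" and Y: "stone_space Y" and Z: "stone_space Z"
  and R: "closed_rel X Y R" and R': "closed_rel Y Z R'"
  shows "Clop_rel X Z (R O R') = Clop_rel X Y R O Clop_rel Y Z R'"
proof
  show "Clop_rel X Y R O Clop_rel Y Z R' \<subseteq> Clop_rel X Z (R O R')"
    unfolding Clop_rel_def by blast
next
  show "Clop_rel X Z (R O R') \<subseteq> Clop_rel X Y R O Clop_rel Y Z R'"
  proof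
    fix p assume p: "p \<in> Clop_rel X Z (R O R')"
    then obtain U W where pUW: "p = (U, W)" and U: "U \<in> carrier (Clop X)" and W: "W \<in> carrier (Clop Z)"
      and RUW: "(R O R') `` U \<subseteq> W" unfolding Clop_rel_def by blast
    have subR: "R \<subseteq> topspace X \<times> topspace Y" using R unfolding closed_rel_def by auto
    have K: "closedin Y (R `` U)"
      using rel_image_closed[OF R] X U unfolding stone_space_def carrier_Clop by blast
    have O: "openin Y {y \<in> topspace Y. R' `` {y} \<subseteq> W}"
      using rel_preimage_open[OF R'] Z W unfolding stone_space_def carrier_Clop by blast
    have "R `` U \<subseteq> {y \<in> topspace Y. R' `` {y} \<subseteq> W}" using RUW subR by blast
    then obtain V where V: "closedin Y V" "openin Y V" "R `` U \<subseteq> V" "V \<subseteq> {y \<in> topspace Y. R' `` {y} \<subseteq> W}"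
      using clopen_between[OF Y K O] by blast
    have "(U, V) \<in> Clop_rel X Y R" using U V unfolding Clop_rel_def carrier_Clop by blast
    moreover have "(V, W) \<in> Clop_rel Y Z R'" using W V unfolding Clop_rel_def carrier_Clop by blast
    ultimately show "p \<in> Clop_rel X Y R O Clop_rel Y Z R'" using pUW by blast
  qed
qed



lemma subord_ax: assumes "subordination A B S" shows
  "S \<subseteq> carrier A \<times> carrier B"
  "(zero A, zero B) \<in> S" "(one A, one B) \<in> S"
  "\<And>a b c. a\<in>carrier A \<Longrightarrow> b\<in>carrier A \<Longrightarrow> c\<in>carrier B \<Longrightarrow>
        (a, c) \<in> S \<Longrightarrow> (b, c) \<in> S \<Longrightarrow> (join A a b, c) \<in> S"
  "\<And>a c d. a\<in>carrier A \<Longrightarrow> c\<in>carrier B \<Longrightarrow> d\<in>carrier B \<Longrightarrow>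
        (a, c) \<in> S \<Longrightarrow> (a, d) \<in> S \<Longrightarrow> (a, meet B c d) \<in> S"
  "\<And>a b c d. a\<in>carrier A \<Longrightarrow> b\<in>carrier A \<Longrightarrow> c\<in>carrier B \<Longrightarrow> d\<in>carrier B \<Longrightarrow>
        ba_le A a b \<Longrightarrow> (b, c) \<in> S \<Longrightarrow> ba_le B c d \<Longrightarrow> (a, d) \<in> S"
  using assms unfolding subordination_def by blast+

lemma subord_image_filter:
  assumes A: "BA A" and B: "BA B" and S: "subordination A B S" and x: "ultrafilter_of A x"
  shows "S `` x \<subseteq> carrier B" "S `` x \<noteq> {}"
    "\<forall>a\<in>S `` x. \<forall>b\<in>S `` x. meet B a b \<in> S `` x"
    "\<forall>a\<in>S `` x. \<forall>b\<in>carrier B. ba_le B a b \<longrightarrow> b \<in> S `` x"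
proof -
  interpret a: BA A by (rule A)
  interpret b: BA B by (rule B)
  note s = subord_ax[OF S]
  show "S `` x \<subseteq> carrier B" using s(1) by blast
  show "S `` x \<noteq> {}" using s(3) a.uf_one[OF x] by blast
  show "\<forall>a\<in>S `` x. \<forall>b\<in>S `` x. meet B a b \<in> S `` x"
  proof (intro ballI)
    fix c d assume "c \<in> S `` x" "d \<in> S `` x"
    then obtain e f where ef: "e \<in> x" "f \<in> x" "(e, c) \<in> S" "(f, d) \<in> S" by blast
    have C: "e \<in> carrier A" "f \<in> carrier A" "c \<in> carrier B" "d \<in> carrier B" using ef s(1) by auto
    define g where "g = meet A e f"
    have g: "g \<in> x" "g \<in> carrier A" using ef C a.uf_meet[OF x] unfolding g_def by auto
    have "(g, c) \<in> S" using s(6)[of g e c c] C g ef unfolding g_def by simp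
    moreover have "(g, d) \<in> S" using s(6)[of g f d d] C g ef unfolding g_def by simp
    ultimately have "(g, meet B c d) \<in> S" using s(5) C g by blast
    then show "meet B c d \<in> S `` x" using g by blast
  qed
  show "\<forall>a\<in>S `` x. \<forall>b\<in>carrier B. ba_le B a b \<longrightarrow> b \<in> S `` x"
  proof (intro ballI impI)
    fix c d assume "c \<in> S `` x" "d \<in> carrier B" "ba_le B c d"
    then obtain e where e: "e \<in> x" "(e, c) \<in> S" by blast
    then have "e \<in> carrier A" "c \<in> carrier B" using s(1) by auto
    then have "(e, d) \<in> S" using s(6)[of e e c d] e \<open>d \<in> carrier B\<close> \<open>ba_le B c d\<close> by simp
    then show "d \<in> S `` x" using e by blast
  qed
qed

lemma Ult_rel_closed: assumes A: "BA A" and B: "BA B" and S: "subordination A B S"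
  shows "closed_rel (Ult A) (Ult B) (Ult_rel A B S)"
proof -
  interpret a: BA A by (rule A)
  interpret b: BA B by (rule B)
  note s = subord_ax[OF S]
  have sub: "Ult_rel A B S \<subseteq> topspace (Ult A) \<times> topspace (Ult B)"
    unfolding Ult_rel_def a.topspace_Ult b.topspace_Ult a.ufs_def b.ufs_def by auto
  have "openin (prod_topology (Ult A) (Ult B)) (topspace (prod_topology (Ult A) (Ult B)) - Ult_rel A B S)"
    unfolding openin_prod_topology_alt
  proof (intro allI impI)
    fix x y assume xy: "(x, y) \<in> topspace (prod_topology (Ult A) (Ult B)) - Ult_rel A B S"
    then have ux: "ultrafilter_of A x" and uy: "ultrafilter_of B y"
      by (simp_all add: a.topspace_Ult b.topspace_Ult a.ufs_def b.ufs_def)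
    then obtain a c where ac: "a \<in> x" "(a, c) \<in> S" "c \<notin> y" using xy unfolding Ult_rel_def by auto
    then have C: "a \<in> carrier A" "c \<in> carrier B" using s(1) by auto
    show "\<exists>U V. openin (Ult A) U \<and> openin (Ult B) V \<and> x \<in> U \<and> y \<in> V \<and>
          U \<times> V \<subseteq> topspace (prod_topology (Ult A) (Ult B)) - Ult_rel A B S"
    proof (intro exI conjI)
      show "openin (Ult A) (stone_map A a)" using a.open_stone_map C by simp
      show "openin (Ult B) (stone_map B (neg B c))" using b.open_stone_map C by simp
      show "x \<in> stone_map A a" using ux ac unfolding stone_map_def by simp
      show "y \<in> stone_map B (neg B c)" using uy ac C b.uf_neg[OF uy] unfolding stone_map_def by simp
      show "stone_map A a \<times> stone_map B (neg B c) \<subseteq> topspace (prod_topology (Ult A) (Ult B)) - Ult_rel A B S"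
      proof
        fix p assume "p \<in> stone_map A a \<times> stone_map B (neg B c)"
        then obtain x' y' where p: "p = (x', y')" "ultrafilter_of A x'" "a \<in> x'" "ultrafilter_of B y'" "neg B c \<in> y'"
          unfolding stone_map_def by auto
        then have "c \<notin> y'" using b.uf_neg C by blast
        then have "p \<notin> Ult_rel A B S" using p ac unfolding Ult_rel_def by blast
        moreover have "p \<in> topspace (prod_topology (Ult A) (Ult B))"
          using p by (simp add: a.topspace_Ult b.topspace_Ult a.ufs_def b.ufs_def)
        ultimately show "p \<in> topspace (prod_topology (Ult A) (Ult B)) - Ult_rel A B S" by blast
      qed
    qed
  qed
  then have "closedin (prod_topology (Ult A) (Ult B)) (Ult_rel A B S)"
    using sub unfolding closedin_def by simp
  then show ?thesis using sub unfolding closed_rel_def by simp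
qed

lemma Ult_rel_id: assumes A: "BA A" shows "Ult_rel A A (ba_id A) = stone_id (Ult A)"
proof -
  interpret a: BA A by (rule A)
  have img: "ba_id A `` x = x" if u: "ultrafilter_of A x" for x
  proof
    show "ba_id A `` x \<subseteq> x" using a.uf_up[OF u] unfolding ba_id_def by blast
    show "x \<subseteq> ba_id A `` x"
    proof
      fix b assume "b \<in> x"
      then have "b \<in> a.C" using a.uf_sub[OF u] by blast
      then have "(b, b) \<in> ba_id A" unfolding ba_id_def by simp
      then show "b \<in> ba_id A `` x" using \<open>b \<in> x\<close> by blast
    qed
  qed
  show ?thesis unfolding stone_id_def a.topspace_Ult
  proof (intro set_eqI iffI)
    fix p assume "p \<in> Ult_rel A A (ba_id A)"
    then obtain x y where "p = (x, y)" "ultrafilter_of A x" "ultrafilter_of A y" "x \<subseteq> y"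
      unfolding Ult_rel_def using img by auto
    then show "p \<in> Id_on a.ufs" using a.uf_subset_eq unfolding a.ufs_def by auto
  next
    fix p assume "p \<in> Id_on a.ufs"
    then show "p \<in> Ult_rel A A (ba_id A)" unfolding Ult_rel_def a.ufs_def using img by auto
  qed
qed

lemma Ult_rel_comp: assumes A: "BA A" and B: "BA B" and C: "BA C"
  and S: "subordination A B S" and S': "subordination B C S'"
  shows "Ult_rel A C (S O S') = Ult_rel A B S O Ult_rel B C S'"
proof
  show "Ult_rel A B S O Ult_rel B C S' \<subseteq> Ult_rel A C (S O S')"
    unfolding Ult_rel_def by blast
next
  interpret a: BA A by (rule A)
  interpret b: BA B by (rule B)
  interpret c: BA C by (rule C)
  note s = subord_ax[OF S] and s' = subord_ax[OF S']
  show "Ult_rel A C (S O S') \<subseteq> Ult_rel A B S O Ult_rel B C S'"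
  proof
    fix p assume "p \<in> Ult_rel A C (S O S')"
    then obtain x z where p: "p = (x, z)" and ux: "ultrafilter_of A x" and uz: "ultrafilter_of C z"
      and sub: "(S O S') `` x \<subseteq> z" unfolding Ult_rel_def by blast
    define J where "J = {b \<in> carrier B. \<exists>c\<in>carrier C. c \<notin> z \<and> (b, c) \<in> S'}"
    have J1: "J \<subseteq> carrier B" unfolding J_def by blast
    have J2: "zero B \<in> J" unfolding J_def using s'(2) c.uf_zero[OF uz] by auto
    have J3: "\<forall>a\<in>J. \<forall>b\<in>J. join B a b \<in> J"
    proof (intro ballI)
      fix b b' assume "b \<in> J" "b' \<in> J"
      then obtain c c' where cc: "b \<in> carrier B" "b' \<in> carrier B" "c \<in> carrier C" "c' \<in> carrier C"
        "c \<notin> z" "c' \<notin> z" "(b, c) \<in> S'" "(b', c') \<in> S'" unfolding J_def by blast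
      have nz: "join C c c' \<notin> z" using cc c.uf_join[OF uz] by blast
      have "(b, join C c c') \<in> S'" using s'(6)[of b b c "join C c c'"] cc by simp
      moreover have "(b', join C c c') \<in> S'" using s'(6)[of b' b' c' "join C c c'"] cc by simp
      ultimately have "(join B b b', join C c c') \<in> S'" using s'(4) cc by simp
      then show "join B b b' \<in> J" unfolding J_def using cc nz by auto
    qed
    have J4: "\<forall>a\<in>J. \<forall>b\<in>carrier B. ba_le B b a \<longrightarrow> b \<in> J"
    proof (intro ballI impI)
      fix a b assume "a \<in> J" "b \<in> carrier B" "ba_le B b a"
      then obtain c where "a \<in> carrier B" "c \<in> carrier C" "c \<notin> z" "(a, c) \<in> S'" unfolding J_def by blast
      then show "b \<in> J" unfolding J_def using s'(6)[of b a c c] \<open>b \<in> carrier B\<close> \<open>ba_le B b a\<close> by auto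
    qed
    have FJ: "S `` x \<inter> J = {}"
    proof (rule ccontr)
      assume "S `` x \<inter> J \<noteq> {}"
      then obtain b c where "b \<in> S `` x" "c \<notin> z" "(b, c) \<in> S'" unfolding J_def by blast
      then have "c \<in> (S O S') `` x" by blast
      then show False using sub \<open>c \<notin> z\<close> by blast
    qed
    obtain y where y: "ultrafilter_of B y" "S `` x \<subseteq> y" "y \<inter> J = {}"
      using b.pft[OF subord_image_filter[OF A B S ux] J1 J2 J3 J4 FJ] by blast
    have "S' `` y \<subseteq> z"
    proof
      fix c assume "c \<in> S' `` y"
      then obtain b where "b \<in> y" "(b, c) \<in> S'" by blast
      then have "b \<in> carrier B" "c \<in> carrier C" using s'(1) by auto
      then show "c \<in> z" using y \<open>b \<in> y\<close> \<open>(b, c) \<in> S'\<close> unfolding J_def by blast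
    qed
    then have "(x, y) \<in> Ult_rel A B S" "(y, z) \<in> Ult_rel B C S'"
      using ux uz y unfolding Ult_rel_def by auto
    then show "p \<in> Ult_rel A B S O Ult_rel B C S'" using p by blast
  qed
qed



definition clopnbhd :: "'x topology \<Rightarrow> 'x \<Rightarrow> 'x set set" where
  "clopnbhd X p = {U \<in> carrier (Clop X). p \<in> U}"

lemma eta_rel_eq: "eta_rel X = {(p, clopnbhd X p) | p. p \<in> topspace X}"
  unfolding eta_rel_def clopnbhd_def by simp

lemma Clop_ops: "meet (Clop X) U V = U \<inter> V" "join (Clop X) U V = U \<union> V" "neg (Clop X) U = topspace X - U"
  "zero (Clop X) = {}" "one (Clop X) = topspace X"
  unfolding Clop_def by simp_all

lemma BA_Clop: "BA (Clop X)" by (rule BA.intro, rule is_ba_Clop)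

lemma eta_uf: assumes p: "p \<in> topspace X" shows "ultrafilter_of (Clop X) (clopnbhd X p)"
  unfolding ultrafilter_of_def clopnbhd_def Clop_ops ba_le_Clop carrier_Clop
  using p by (auto intro: closedin_Int openin_Int closedin_diff openin_diff)

lemma eta_inj: assumes X: "stone_space X" and p: "p \<in> topspace X" and q: "q \<in> topspace X"
  and e: "clopnbhd X p = clopnbhd X q" shows "p = q"
proof (rule ccontr)
  assume "p \<noteq> q"
  then obtain U where "closedin X U" "openin X U" "p \<in> U" "q \<notin> U" using separate_points[OF X p q] by blast
  then have "U \<in> clopnbhd X p" "U \<notin> clopnbhd X q" unfolding clopnbhd_def carrier_Clop by auto
  then show False using e by simp
qed

lemma eta_surj: assumes X: "stone_space X" and u: "ultrafilter_of (Clop X) u"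
  shows "\<exists>p\<in>topspace X. u = clopnbhd X p"
proof -
  interpret c: BA "Clop X" by (rule BA_Clop)
  have uC: "u \<subseteq> carrier (Clop X)" using c.uf_sub[OF u] .
  have fin: "topspace X \<inter> \<Inter>G \<in> u" if "finite G" "G \<subseteq> u" for G
    using that
  proof (induction G rule: finite_induct)
    case empty then show ?case using c.uf_one[OF u] by (simp add: Clop_ops)
  next
    case (insert U G)
    then have "U \<in> u" "topspace X \<inter> \<Inter>G \<in> u" by auto
    moreover have "U \<in> carrier (Clop X)" "topspace X \<inter> \<Inter>G \<in> carrier (Clop X)" using calculation uC by auto
    ultimately have "meet (Clop X) U (topspace X \<inter> \<Inter>G) \<in> u" using c.uf_meet[OF u] by blast
    then show ?case by (simp add: Clop_ops Int_left_commute)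
  qed
  have "\<exists>p\<in>topspace X. \<forall>U\<in>u. p \<in> U"
  proof (rule ccontr)
    assume nex: "\<not> (\<exists>p\<in>topspace X. \<forall>U\<in>u. p \<in> U)"
    define \<U> where "\<U> = (\<lambda>U. topspace X - U) ` u"
    have "\<forall>V\<in>\<U>. openin X V" unfolding \<U>_def using uC by (auto simp: carrier_Clop)
    moreover have "topspace X \<subseteq> \<Union>\<U>" using nex unfolding \<U>_def by blast
    ultimately obtain \<F> where F: "finite \<F>" "\<F> \<subseteq> \<U>" "topspace X \<subseteq> \<Union>\<F>"
      using X unfolding stone_space_def compact_space_alt by meson
    then obtain G where G: "G \<subseteq> u" "finite G" "\<F> = (\<lambda>U. topspace X - U) ` G"
      unfolding \<U>_def by (meson finite_subset_image)
    then have "topspace X \<inter> \<Inter>G = {}" using F by auto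
    then show False using fin[OF G(2,1)] c.uf_zero[OF u] by (simp add: Clop_ops)
  qed
  then obtain p where p: "p \<in> topspace X" "\<forall>U\<in>u. p \<in> U" by blast
  have "u = clopnbhd X p"
  proof
    show "u \<subseteq> clopnbhd X p" using p uC unfolding clopnbhd_def by auto
    show "clopnbhd X p \<subseteq> u"
    proof
      fix U assume U: "U \<in> clopnbhd X p"
      show "U \<in> u"
      proof (rule ccontr)
        assume "U \<notin> u"
        then have "topspace X - U \<in> u" using c.uf_neg[OF u] U unfolding clopnbhd_def by (simp add: Clop_ops)
        then show False using p U unfolding clopnbhd_def by auto
      qed
    qed
  qed
  then show ?thesis using p by blast
qed

lemma topspace_Ult_Clop: "topspace (Ult (Clop X)) = {u. ultrafilter_of (Clop X) u}"
proof -
  interpret c: BA "Clop X" by (rule BA_Clop)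
  show ?thesis using c.topspace_Ult unfolding c.ufs_def .
qed

lemma eta_closed: assumes X: "stone_space X" shows "closed_rel X (Ult (Clop X)) (eta_rel X)"
proof -
  interpret c: BA "Clop X" by (rule BA_Clop)
  have sub: "eta_rel X \<subseteq> topspace X \<times> topspace (Ult (Clop X))"
    unfolding eta_rel_eq topspace_Ult_Clop using eta_uf by auto
  have "openin (prod_topology X (Ult (Clop X))) (topspace (prod_topology X (Ult (Clop X))) - eta_rel X)"
    unfolding openin_prod_topology_alt
  proof (intro allI impI)
    fix p u assume pu: "(p, u) \<in> topspace (prod_topology X (Ult (Clop X))) - eta_rel X"
    then have pu': "p \<in> topspace X" "u \<in> topspace (Ult (Clop X))" "(p, u) \<notin> eta_rel X" by auto
    then have p: "p \<in> topspace X" and u: "ultrafilter_of (Clop X) u" by (simp_all add: topspace_Ult_Clop)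
    have ne: "u \<noteq> clopnbhd X p" using pu'(1,3) unfolding eta_rel_eq by blast
    obtain q where q: "q \<in> topspace X" "u = clopnbhd X q" using eta_surj[OF X u] by blast
    then have "p \<noteq> q" using ne by auto
    then obtain U where U: "closedin X U" "openin X U" "p \<in> U" "q \<notin> U" using separate_points[OF X p q(1)] by blast
    have UC: "topspace X - U \<in> carrier (Clop X)" using U by (auto simp: carrier_Clop)
    show "\<exists>V W. openin X V \<and> openin (Ult (Clop X)) W \<and> p \<in> V \<and> u \<in> W \<and>
          V \<times> W \<subseteq> topspace (prod_topology X (Ult (Clop X))) - eta_rel X"
    proof (intro exI conjI)
      show "openin X U" by (rule U(2))
      show "openin (Ult (Clop X)) (stone_map (Clop X) (topspace X - U))" using c.open_stone_map[OF UC] .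
      show "p \<in> U" by (rule U(3))
      show "u \<in> stone_map (Clop X) (topspace X - U)"
        using u q U UC unfolding stone_map_def clopnbhd_def by auto
      show "U \<times> stone_map (Clop X) (topspace X - U) \<subseteq> topspace (prod_topology X (Ult (Clop X))) - eta_rel X"
      proof
        fix z assume "z \<in> U \<times> stone_map (Clop X) (topspace X - U)"
        then obtain p' u' where z: "z = (p', u')" "p' \<in> U" "ultrafilter_of (Clop X) u'" "topspace X - U \<in> u'"
          unfolding stone_map_def by auto
        have p': "p' \<in> topspace X" using z U closedin_subset by blast
        have "u' \<noteq> clopnbhd X p'" using z unfolding clopnbhd_def by auto
        then have "(p', u') \<notin> eta_rel X" unfolding eta_rel_eq by blast
        moreover have "u' \<in> topspace (Ult (Clop X))" using z(3) by (simp add: topspace_Ult_Clop)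
        ultimately show "z \<in> topspace (prod_topology X (Ult (Clop X))) - eta_rel X"
          using z(1) p' by simp
      qed
    qed
  qed
  then have "closedin (prod_topology X (Ult (Clop X))) (eta_rel X)"
    using sub unfolding closedin_def by simp
  then show ?thesis using sub unfolding closed_rel_def by simp
qed

lemma eta_iso: assumes X: "stone_space X" shows "stone_iso X (Ult (Clop X)) (eta_rel X)"
  unfolding stone_iso_def
proof (intro conjI exI)
  show "closed_rel X (Ult (Clop X)) (eta_rel X)" using eta_closed[OF X] .
  show "closed_rel (Ult (Clop X)) X (converse (eta_rel X))" using closed_rel_converse[OF eta_closed[OF X]] .
  show "eta_rel X O converse (eta_rel X) = stone_id X"
    unfolding stone_id_def eta_rel_eq using eta_inj[OF X] by auto
  show "converse (eta_rel X) O eta_rel X = stone_id (Ult (Clop X))"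
    unfolding stone_id_def eta_rel_eq topspace_Ult_Clop using eta_surj[OF X] eta_uf by fastforce
qed

lemma eta_natural: assumes X: "stone_space X" and Y: "stone_space Y" and R: "closed_rel X Y R"
  shows "eta_rel X O Ult_rel (Clop X) (Clop Y) (Clop_rel X Y R) = R O eta_rel Y"
proof (intro set_eqI iffI)
  have subR: "R \<subseteq> topspace X \<times> topspace Y" and cR: "closedin (prod_topology X Y) R"
    using R unfolding closed_rel_def by auto
  fix z
  {
    assume "z \<in> eta_rel X O Ult_rel (Clop X) (Clop Y) (Clop_rel X Y R)"
    then obtain p w where z: "z = (p, w)" and p: "p \<in> topspace X" and w: "ultrafilter_of (Clop Y) w"
      and sub: "Clop_rel X Y R `` clopnbhd X p \<subseteq> w"
      unfolding eta_rel_eq Ult_rel_def by auto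
    obtain q where q: "q \<in> topspace Y" "w = clopnbhd Y q" using eta_surj[OF Y w] by blast
    have "(p, q) \<in> R"
    proof (rule ccontr)
      assume npq: "(p, q) \<notin> R"
      have op: "openin (prod_topology X Y) (topspace (prod_topology X Y) - R)"
        using cR unfolding closedin_def by simp
      have pq: "(p, q) \<in> topspace (prod_topology X Y) - R" using npq p q by simp
      obtain U0 V0 where UV0: "openin X U0" "openin Y V0" "p \<in> U0" "q \<in> V0"
        "U0 \<times> V0 \<subseteq> topspace (prod_topology X Y) - R"
        using op[unfolded openin_prod_topology_alt, rule_format, OF pq] by blast
      obtain U where U: "closedin X U" "openin X U" "p \<in> U" "U \<subseteq> U0" using clopen_base[OF X UV0(1,3)] by blast
      obtain V1 where V1: "closedin Y V1" "openin Y V1" "q \<in> V1" "V1 \<subseteq> V0" using clopen_base[OF Y UV0(2,4)] by blast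
      define V where "V = topspace Y - V1"
      have VC: "V \<in> carrier (Clop Y)" using V1 unfolding V_def by (auto simp: carrier_Clop)
      have UC: "U \<in> carrier (Clop X)" using U by (auto simp: carrier_Clop)
      have "R `` U \<subseteq> V"
      proof
        fix y assume "y \<in> R `` U"
        then obtain x where "x \<in> U" "(x, y) \<in> R" by blast
        then have xy: "x \<in> U" "(x, y) \<in> R" by blast+
        show "y \<in> V" unfolding V_def
        proof
          show "y \<in> topspace Y" using subR xy(2) by blast
          show "y \<notin> V1"
          proof
            assume "y \<in> V1"
            then have "(x, y) \<in> U0 \<times> V0" using U(4) V1(4) xy(1) by blast
            then show False using UV0(5) xy(2) by blast
          qed
        qed
      qed
      then have "(U, V) \<in> Clop_rel X Y R" using UC VC unfolding Clop_rel_def by auto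
      moreover have "U \<in> clopnbhd X p" using UC U unfolding clopnbhd_def by auto
      ultimately have "V \<in> w" using sub by blast
      then show False using q V1 unfolding clopnbhd_def V_def by auto
    qed
    then show "z \<in> R O eta_rel Y" using z q unfolding eta_rel_eq by auto
  }
  {
    assume "z \<in> R O eta_rel Y"
    then obtain p q where z: "z = (p, clopnbhd Y q)" and pq: "(p, q) \<in> R" and q: "q \<in> topspace Y"
      unfolding eta_rel_eq by auto
    have p: "p \<in> topspace X" using pq subR by auto
    have "Clop_rel X Y R `` clopnbhd X p \<subseteq> clopnbhd Y q"
      using pq unfolding Clop_rel_def clopnbhd_def by auto
    then have "(clopnbhd X p, clopnbhd Y q) \<in> Ult_rel (Clop X) (Clop Y) (Clop_rel X Y R)"
      unfolding Ult_rel_def using eta_uf[OF p] eta_uf[OF q] by auto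
    then show "z \<in> eta_rel X O Ult_rel (Clop X) (Clop Y) (Clop_rel X Y R)"
      using z p unfolding eta_rel_eq by auto
  }
qed



context BA begin

lemma Clop_Ult_ops: "zero (Clop (Ult A)) = {}" "one (Clop (Ult A)) = ufs"
  "meet (Clop (Ult A)) U V = U \<inter> V" "join (Clop (Ult A)) U V = U \<union> V"
  using topspace_Ult by (simp_all add: Clop_ops)

definition epsi where "epsi = {(U, a). U \<in> carrier (Clop (Ult A)) \<and> a \<in> C \<and> U \<subseteq> stone_map A a}"

lemma sm_in: "a \<in> C \<Longrightarrow> stone_map A a \<in> carrier (Clop (Ult A))"
  by (simp add: carrier_Clop_Ult)

lemma CU_elem: "U \<in> carrier (Clop (Ult A)) \<Longrightarrow> \<exists>a\<in>C. U = stone_map A a"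
  by (auto simp: carrier_Clop_Ult)

lemma CU_int: "U \<in> carrier (Clop (Ult A)) \<Longrightarrow> V \<in> carrier (Clop (Ult A)) \<Longrightarrow> U \<inter> V \<in> carrier (Clop (Ult A))"
  using BA.meet_c[OF BA_Clop, of U "Ult A" V] by (simp add: Clop_ops)

lemma eps_subord: "subordination A (Clop (Ult A)) (eps_rel A)"
proof -
  have h1: "eps_rel A \<subseteq> C \<times> carrier (Clop (Ult A))" unfolding eps_rel_def by blast
  have h2: "(zero A, zero (Clop (Ult A))) \<in> eps_rel A"
    unfolding eps_rel_def using sm_in[OF zero_c] by (simp add: Clop_Ult_ops stone_map_zero)
  have h3: "(one A, one (Clop (Ult A))) \<in> eps_rel A"
    unfolding eps_rel_def using sm_in[OF one_c] by (simp add: Clop_Ult_ops stone_map_one)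
  have h4: "\<forall>a\<in>C. \<forall>b\<in>C. \<forall>c\<in>carrier (Clop (Ult A)).
        (a, c) \<in> eps_rel A \<longrightarrow> (b, c) \<in> eps_rel A \<longrightarrow> (join A a b, c) \<in> eps_rel A"
    unfolding eps_rel_def by (simp add: stone_map_join)
  have h5: "\<forall>a\<in>C. \<forall>c\<in>carrier (Clop (Ult A)). \<forall>d\<in>carrier (Clop (Ult A)).
        (a, c) \<in> eps_rel A \<longrightarrow> (a, d) \<in> eps_rel A \<longrightarrow> (a, meet (Clop (Ult A)) c d) \<in> eps_rel A"
    unfolding eps_rel_def Clop_Ult_ops using CU_int by simp
  have h6: "\<forall>a\<in>C. \<forall>b\<in>C. \<forall>c\<in>carrier (Clop (Ult A)). \<forall>d\<in>carrier (Clop (Ult A)).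
        ba_le A a b \<longrightarrow> (b, c) \<in> eps_rel A \<longrightarrow> ba_le (Clop (Ult A)) c d \<longrightarrow> (a, d) \<in> eps_rel A"
  proof (intro ballI impI)
    fix a b c d assume "a \<in> C" "b \<in> C" "c \<in> carrier (Clop (Ult A))" "d \<in> carrier (Clop (Ult A))"
      "ba_le A a b" "(b, c) \<in> eps_rel A" "ba_le (Clop (Ult A)) c d"
    then show "(a, d) \<in> eps_rel A"
      using stone_map_mono[of a b] unfolding eps_rel_def ba_le_Clop by auto
  qed
  show ?thesis unfolding subordination_def using h1 h2 h3 h4 h5 h6 by (intro conjI) assumption+
qed

lemma epsi_subord: "subordination (Clop (Ult A)) A epsi"
proof -
  have h1: "epsi \<subseteq> carrier (Clop (Ult A)) \<times> C" unfolding epsi_def by blast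
  have h2: "(zero (Clop (Ult A)), zero A) \<in> epsi"
    unfolding epsi_def using sm_in[OF zero_c] by (simp add: Clop_Ult_ops stone_map_zero)
  have h3: "(one (Clop (Ult A)), one A) \<in> epsi"
    unfolding epsi_def using sm_in[OF one_c] by (simp add: Clop_Ult_ops stone_map_one)
  have h4: "\<forall>a\<in>carrier (Clop (Ult A)). \<forall>b\<in>carrier (Clop (Ult A)). \<forall>c\<in>C.
        (a, c) \<in> epsi \<longrightarrow> (b, c) \<in> epsi \<longrightarrow> (join (Clop (Ult A)) a b, c) \<in> epsi"
  proof (intro ballI impI)
    fix U V c assume UV: "U \<in> carrier (Clop (Ult A))" "V \<in> carrier (Clop (Ult A))" "c \<in> C"
      "(U, c) \<in> epsi" "(V, c) \<in> epsi"
    then obtain a b where "a \<in> C" "b \<in> C" "U = stone_map A a" "V = stone_map A b"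
      using CU_elem by meson
    then have "U \<union> V \<in> carrier (Clop (Ult A))" using sm_in[of "join A a b"] by (simp add: stone_map_join)
    then show "(join (Clop (Ult A)) U V, c) \<in> epsi" using UV unfolding epsi_def Clop_Ult_ops by simp
  qed
  have h5: "\<forall>a\<in>carrier (Clop (Ult A)). \<forall>c\<in>C. \<forall>d\<in>C.
        (a, c) \<in> epsi \<longrightarrow> (a, d) \<in> epsi \<longrightarrow> (a, meet A c d) \<in> epsi"
    unfolding epsi_def by (simp add: stone_map_meet)
  have h6: "\<forall>a\<in>carrier (Clop (Ult A)). \<forall>b\<in>carrier (Clop (Ult A)). \<forall>c\<in>C. \<forall>d\<in>C.
        ba_le (Clop (Ult A)) a b \<longrightarrow> (b, c) \<in> epsi \<longrightarrow> ba_le A c d \<longrightarrow> (a, d) \<in> epsi"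
  proof (intro ballI impI)
    fix a b c d assume "a \<in> carrier (Clop (Ult A))" "b \<in> carrier (Clop (Ult A))" "c \<in> C" "d \<in> C"
      "ba_le (Clop (Ult A)) a b" "(b, c) \<in> epsi" "ba_le A c d"
    then show "(a, d) \<in> epsi"
      using stone_map_mono[of c d] unfolding epsi_def ba_le_Clop by auto
  qed
  show ?thesis unfolding subordination_def using h1 h2 h3 h4 h5 h6 by (intro conjI) assumption+
qed

lemma eps_iso: "subord_iso A (Clop (Ult A)) (eps_rel A)"
  unfolding subord_iso_def
proof (intro conjI exI)
  show "subordination A (Clop (Ult A)) (eps_rel A)" by (rule eps_subord)
  show "subordination (Clop (Ult A)) A epsi" by (rule epsi_subord)
  show "eps_rel A O epsi = ba_id A"
  proof (intro set_eqI iffI)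
    fix p assume "p \<in> eps_rel A O epsi"
    then obtain a U b where "p = (a, b)" "a \<in> C" "b \<in> C" "stone_map A a \<subseteq> U" "U \<subseteq> stone_map A b"
      unfolding eps_rel_def epsi_def by blast
    then show "p \<in> ba_id A" unfolding ba_id_def using stone_map_le_iff[of a b] by auto
  next
    fix p assume "p \<in> ba_id A"
    then obtain a b where ab: "p = (a, b)" "a \<in> C" "b \<in> C" "ba_le A a b" unfolding ba_id_def by blast
    then have "(a, stone_map A a) \<in> eps_rel A" "(stone_map A a, b) \<in> epsi"
      unfolding eps_rel_def epsi_def using sm_in[of a] stone_map_mono[of a b] by auto
    then show "p \<in> eps_rel A O epsi" using ab(1) by blast
  qed
  show "epsi O eps_rel A = ba_id (Clop (Ult A))"
  proof (intro set_eqI iffI)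
    fix p assume "p \<in> epsi O eps_rel A"
    then show "p \<in> ba_id (Clop (Ult A))" unfolding eps_rel_def epsi_def ba_id_def ba_le_Clop by blast
  next
    fix p assume "p \<in> ba_id (Clop (Ult A))"
    then obtain U V where UV: "p = (U, V)" "U \<in> carrier (Clop (Ult A))" "V \<in> carrier (Clop (Ult A))" "U \<subseteq> V"
      unfolding ba_id_def ba_le_Clop by blast
    then obtain a where "a \<in> C" "U = stone_map A a" using CU_elem by blast
    then have "(U, a) \<in> epsi" "(a, V) \<in> eps_rel A" unfolding eps_rel_def epsi_def using UV by auto
    then show "p \<in> epsi O eps_rel A" using UV(1) by blast
  qed
qed

end

lemma eps_natural: assumes A: "BA A" and B: "BA B" and S: "subordination A B S"
  shows "eps_rel A O Clop_rel (Ult A) (Ult B) (Ult_rel A B S) = S O eps_rel B"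
proof (intro set_eqI iffI)
  interpret a: BA A by (rule A)
  interpret b: BA B by (rule B)
  note s = subord_ax[OF S]
  have img: "Ult_rel A B S `` stone_map A a \<subseteq> stone_map B c" if "(a, c) \<in> S" for a c
    using that unfolding Ult_rel_def stone_map_def by auto
  fix z
  {
    assume "z \<in> eps_rel A O Clop_rel (Ult A) (Ult B) (Ult_rel A B S)"
    then obtain a U V where z: "z = (a, V)" and a: "a \<in> carrier A" and U: "U \<in> carrier (Clop (Ult A))"
      and aU: "stone_map A a \<subseteq> U" and V: "V \<in> carrier (Clop (Ult B))"
      and UV: "Ult_rel A B S `` U \<subseteq> V"
      unfolding eps_rel_def Clop_rel_def by auto
    obtain c where c: "c \<in> carrier B" "V = stone_map B c" using V b.carrier_Clop_Ult by auto
    have "(a, c) \<in> S"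
    proof (rule ccontr)
      assume nac: "(a, c) \<notin> S"
      define J where "J = {d \<in> carrier A. (d, c) \<in> S}"
      have J1: "J \<subseteq> carrier A" unfolding J_def by blast
      have J2: "zero A \<in> J" unfolding J_def using s(6)[of "zero A" "zero A" "zero B" c] s(2) c by simp
      have J3: "\<forall>d\<in>J. \<forall>e\<in>J. join A d e \<in> J" unfolding J_def using s(4) c by auto
      have J4: "\<forall>d\<in>J. \<forall>e\<in>carrier A. ba_le A e d \<longrightarrow> e \<in> J"
      proof (intro ballI impI)
        fix d e assume "d \<in> J" "e \<in> carrier A" "ba_le A e d"
        then show "e \<in> J" unfolding J_def using s(6)[of e d c c] c by simp
      qed
      have FJ: "a.upset a \<inter> J = {}"
        unfolding a.upset_def J_def using s(6)[of a _ c c] nac a c by auto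
      obtain x where x: "ultrafilter_of A x" "a.upset a \<subseteq> x" "x \<inter> J = {}"
        using a.pft[OF a.upset_filter(1-4)[OF a] J1 J2 J3 J4 FJ] by blast
      have ax: "a \<in> x" using x a.upset_filter(5)[OF a] by blast
      define J' where "J' = {e \<in> carrier B. ba_le B e c}"
      have J'1: "J' \<subseteq> carrier B" unfolding J'_def by blast
      have J'2: "zero B \<in> J'" unfolding J'_def using c by simp
      have J'3: "\<forall>d\<in>J'. \<forall>e\<in>J'. join B d e \<in> J'" unfolding J'_def using c b.join_leI by auto
      have J'4: "\<forall>d\<in>J'. \<forall>e\<in>carrier B. ba_le B e d \<longrightarrow> e \<in> J'"
        unfolding J'_def using c b.le_trans by blast
      have FJ': "S `` x \<inter> J' = {}"
      proof (rule ccontr)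
        assume "S `` x \<inter> J' \<noteq> {}"
        then obtain d e where de: "d \<in> x" "(d, e) \<in> S" "e \<in> carrier B" "ba_le B e c" unfolding J'_def by blast
        then have "d \<in> carrier A" using s(1) by auto
        then have "(d, c) \<in> S" using s(6)[of d d e c] de c by simp
        then show False using x(3) de \<open>d \<in> carrier A\<close> unfolding J_def by blast
      qed
      obtain y where y: "ultrafilter_of B y" "S `` x \<subseteq> y" "y \<inter> J' = {}"
        using b.pft[OF subord_image_filter[OF A B S x(1)] J'1 J'2 J'3 J'4 FJ'] by blast
      have "(x, y) \<in> Ult_rel A B S" using x y unfolding Ult_rel_def by auto
      moreover have "x \<in> U" using aU ax x unfolding stone_map_def by auto
      ultimately have "y \<in> V" using UV by blast
      then have "c \<in> y" using c unfolding stone_map_def by auto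
      then show False using y c unfolding J'_def by auto
    qed
    then show "z \<in> S O eps_rel B" using z c V unfolding eps_rel_def by auto
  }
  {
    assume "z \<in> S O eps_rel B"
    then obtain a c V where z: "z = (a, V)" and ac: "(a, c) \<in> S" and V: "V \<in> carrier (Clop (Ult B))"
      and cV: "stone_map B c \<subseteq> V" unfolding eps_rel_def by auto
    have a: "a \<in> carrier A" using ac s(1) by auto
    have "stone_map A a \<in> carrier (Clop (Ult A))" using a a.carrier_Clop_Ult by auto
    moreover have "Ult_rel A B S `` stone_map A a \<subseteq> V" using img[OF ac] cV by blast
    ultimately show "z \<in> eps_rel A O Clop_rel (Ult A) (Ult B) (Ult_rel A B S)"
      using z a V unfolding eps_rel_def Clop_rel_def by auto
  }
qed




lemma stone_Ult': "is_ba A \<Longrightarrow> stone_space (Ult A)"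
  by (rule BA.stone_Ult[OF BA.intro])
lemma Ult_rel_closed': "is_ba A \<Longrightarrow> is_ba B \<Longrightarrow> subordination A B S \<Longrightarrow> closed_rel (Ult A) (Ult B) (Ult_rel A B S)"
  by (rule Ult_rel_closed[OF BA.intro BA.intro])
lemma Ult_rel_id': "is_ba A \<Longrightarrow> Ult_rel A A (ba_id A) = stone_id (Ult A)"
  by (rule Ult_rel_id[OF BA.intro])
lemma Ult_rel_comp': "is_ba A \<Longrightarrow> is_ba B \<Longrightarrow> is_ba C \<Longrightarrow> subordination A B S \<Longrightarrow> subordination B C S' \<Longrightarrow>
  Ult_rel A C (S O S') = Ult_rel A B S O Ult_rel B C S'"
  by (rule Ult_rel_comp[OF BA.intro BA.intro BA.intro])
lemma eps_iso': "is_ba A \<Longrightarrow> subord_iso A (Clop (Ult A)) (eps_rel A)"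
  by (rule BA.eps_iso[OF BA.intro])
lemma eps_natural': "is_ba A \<Longrightarrow> is_ba B \<Longrightarrow> subordination A B S \<Longrightarrow>
  eps_rel A O Clop_rel (Ult A) (Ult B) (Ult_rel A B S) = S O eps_rel B"
  by (rule eps_natural[OF BA.intro BA.intro])
lemma Clop_rel_id': "stone_space X \<Longrightarrow> Clop_rel X X (stone_id X) = ba_id (Clop X)"
  by (rule Clop_rel_id)
lemma subord_Clop_rel': "stone_space X \<Longrightarrow> stone_space Y \<Longrightarrow> closed_rel X Y R \<Longrightarrow> subordination (Clop X) (Clop Y) (Clop_rel X Y R)"
  by (rule subord_Clop_rel)
lemma is_ba_Clop': "stone_space X \<Longrightarrow> is_ba (Clop X)"
  by (rule is_ba_Clop)

theorem corollary2p6: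
  shows
  "\<comment> \<open>Clop is a functor Stone^R \<rightarrow> BA^S\<close>
   (\<forall>X :: 'x topology. stone_space X \<longrightarrow> is_ba (Clop X)) \<and>
   (\<forall>(X :: 'x topology) (Y :: 'y topology) R. stone_space X \<longrightarrow> stone_space Y \<longrightarrow>
      closed_rel X Y R \<longrightarrow> subordination (Clop X) (Clop Y) (Clop_rel X Y R)) \<and>
   (\<forall>X :: 'x topology. stone_space X \<longrightarrow> Clop_rel X X (stone_id X) = ba_id (Clop X)) \<and>
   (\<forall>(X :: 'x topology) (Y :: 'y topology) (Z :: 'z topology) R R'.
      stone_space X \<longrightarrow> stone_space Y \<longrightarrow> stone_space Z \<longrightarrow>
      closed_rel X Y R \<longrightarrow> closed_rel Y Z R' \<longrightarrow>
      Clop_rel X Z (R O R') = Clop_rel X Y R O Clop_rel Y Z R') \<and>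
   \<comment> \<open>Ult is a functor BA^S \<rightarrow> Stone^R\<close>
   (\<forall>A :: 'a ba. is_ba A \<longrightarrow> stone_space (Ult A)) \<and>
   (\<forall>(A :: 'a ba) (B :: 'b ba) S. is_ba A \<longrightarrow> is_ba B \<longrightarrow>
      subordination A B S \<longrightarrow> closed_rel (Ult A) (Ult B) (Ult_rel A B S)) \<and>
   (\<forall>A :: 'a ba. is_ba A \<longrightarrow> Ult_rel A A (ba_id A) = stone_id (Ult A)) \<and>
   (\<forall>(A :: 'a ba) (B :: 'b ba) (C :: 'c ba) S S'.
      is_ba A \<longrightarrow> is_ba B \<longrightarrow> is_ba C \<longrightarrow>
      subordination A B S \<longrightarrow> subordination B C S' \<longrightarrow>
      Ult_rel A C (S O S') = Ult_rel A B S O Ult_rel B C S') \<and>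
   \<comment> \<open>natural isomorphism Id \<cong> Ult \<circ> Clop on Stone^R\<close>
   (\<forall>X :: 'x topology. stone_space X \<longrightarrow> stone_iso X (Ult (Clop X)) (eta_rel X)) \<and>
   (\<forall>(X :: 'x topology) (Y :: 'y topology) R. stone_space X \<longrightarrow> stone_space Y \<longrightarrow>
      closed_rel X Y R \<longrightarrow>
      eta_rel X O Ult_rel (Clop X) (Clop Y) (Clop_rel X Y R) = R O eta_rel Y) \<and>
   \<comment> \<open>natural isomorphism Id \<cong> Clop \<circ> Ult on BA^S\<close>
   (\<forall>A :: 'a ba. is_ba A \<longrightarrow> subord_iso A (Clop (Ult A)) (eps_rel A)) \<and>
   (\<forall>(A :: 'a ba) (B :: 'b ba) S. is_ba A \<longrightarrow> is_ba B \<longrightarrow>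
      subordination A B S \<longrightarrow>
      eps_rel A O Clop_rel (Ult A) (Ult B) (Ult_rel A B S) = S O eps_rel B)"
proof -
  have c1: "(\<forall>X :: 'x topology. stone_space X \<longrightarrow> is_ba (Clop X))"
    by (intro allI impI) (rule is_ba_Clop'; assumption)
  have c2: "(\<forall>(X :: 'x topology) (Y :: 'y topology) R. stone_space X \<longrightarrow> stone_space Y \<longrightarrow>
      closed_rel X Y R \<longrightarrow> subordination (Clop X) (Clop Y) (Clop_rel X Y R))"
    by (intro allI impI) (rule subord_Clop_rel'; assumption)
  have c3: "(\<forall>X :: 'x topology. stone_space X \<longrightarrow> Clop_rel X X (stone_id X) = ba_id (Clop X))"
    by (intro allI impI) (rule Clop_rel_id'; assumption)
  have c4: "(\<forall>(X :: 'x topology) (Y :: 'y topology) (Z :: 'z topology) R R'.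
      stone_space X \<longrightarrow> stone_space Y \<longrightarrow> stone_space Z \<longrightarrow>
      closed_rel X Y R \<longrightarrow> closed_rel Y Z R' \<longrightarrow>
      Clop_rel X Z (R O R') = Clop_rel X Y R O Clop_rel Y Z R')"
    by (intro allI impI) (rule Clop_rel_comp; assumption)
  have c5: "(\<forall>A :: 'a ba. is_ba A \<longrightarrow> stone_space (Ult A))"
    by (intro allI impI) (rule stone_Ult'; assumption)
  have c6: "(\<forall>(A :: 'a ba) (B :: 'b ba) S. is_ba A \<longrightarrow> is_ba B \<longrightarrow>
      subordination A B S \<longrightarrow> closed_rel (Ult A) (Ult B) (Ult_rel A B S))"
    by (intro allI impI) (rule Ult_rel_closed'; assumption)
  have c7: "(\<forall>A :: 'a ba. is_ba A \<longrightarrow> Ult_rel A A (ba_id A) = stone_id (Ult A))"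
    by (intro allI impI) (rule Ult_rel_id'; assumption)
  have c8: "(\<forall>(A :: 'a ba) (B :: 'b ba) (C :: 'c ba) S S'.
      is_ba A \<longrightarrow> is_ba B \<longrightarrow> is_ba C \<longrightarrow>
      subordination A B S \<longrightarrow> subordination B C S' \<longrightarrow>
      Ult_rel A C (S O S') = Ult_rel A B S O Ult_rel B C S')"
    by (intro allI impI) (rule Ult_rel_comp'; assumption)
  have c9: "(\<forall>X :: 'x topology. stone_space X \<longrightarrow> stone_iso X (Ult (Clop X)) (eta_rel X))"
    by (intro allI impI) (rule eta_iso; assumption)
  have c10: "(\<forall>(X :: 'x topology) (Y :: 'y topology) R. stone_space X \<longrightarrow> stone_space Y \<longrightarrow>
      closed_rel X Y R \<longrightarrow>
      eta_rel X O Ult_rel (Clop X) (Clop Y) (Clop_rel X Y R) = R O eta_rel Y)"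
    by (intro allI impI) (rule eta_natural; assumption)
  have c11: "(\<forall>A :: 'a ba. is_ba A \<longrightarrow> subord_iso A (Clop (Ult A)) (eps_rel A))"
    by (intro allI impI) (rule eps_iso'; assumption)
  have c12: "(\<forall>(A :: 'a ba) (B :: 'b ba) S. is_ba A \<longrightarrow> is_ba B \<longrightarrow>
      subordination A B S \<longrightarrow>
      eps_rel A O Clop_rel (Ult A) (Ult B) (Ult_rel A B S) = S O eps_rel B)"
    by (intro allI impI) (rule eps_natural'; assumption)
  show ?thesis using c1 c2 c3 c4 c5 c6 c7 c8 c9 c10 c11 c12 by (intro conjI) assumption+
qed

end
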